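(* Let $K$ be a field of characteristic $p$, $q$ a power of $p$, $A=\mathbb{F}_q[T]$, $F=\mathbb{F}_q(T)$, $\iota:A\to K$ an $\mathbb{F}_q$-algebra homomorphism, and let $\phi:F\to K(\tau)$ be the extension of the Carlitz module, $\phi(a/b)=\phi(b)^{-1}\phi(a)$. Give $F$ the language $\mathcal{L}_T=\{0,1,T,+,\cdot\}$ and $K(\tau)$ the language $\mathcal{L}_{\tau,\iota}=\{0,1,\iota(T),\tau,+,\cdot\}$. Then $\phi:F\to K(\tau)$ is an effective Diophantine map.
   Context: $K\{\tau\}$ is the twisted polynomial ring (polynomials $\sum a_i\tau^i$ with $\tau a=a^q\tau$), $K(\tau)$ its left division ring of fractions. The Carlitz module is the $\mathbb{F}_q$-algebra homomorphism $\phi:A\to K\{\tau\}$ with $\phi_T=\iota(T)+\tau$. For a set $R$ with language $\mathcal{L}$, $S\subset R^k$ is Diophantine if $S=\{\vec x\mid\exists\vec y\ (f_1\wedge\dots\wedge f_r)\}$ with basic formulas $f_i$ of the form $(t_1,\dots,t_m)\in S'$, $S'$ a relation or equality and $t_j$ terms of $\mathcal{L}$. A map $d:R_1\to R_2$ is Diophantine if coordinatewise images of Diophantine sets are Diophantine; effective if a Diophantine definition of $d(S)$ can be algorithmically computed from one of $S$. *)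

theory Defs
  imports "HOL-Computational_Algebra.Polynomial" "HOL-Computational_Algebra.Fraction_Field"
          "HOL-Library.Nat_Bijection"
begin

text \<open>A basic formula is an equation between terms
  (the languages under consideration have no relation symbols besides =).\<close>

datatype tm = Var nat | Cst nat | Add tm tm | Mul tm tm

fun eval_tm :: "(nat \<Rightarrow> 'a::{plus,times}) \<Rightarrow> 'a list \<Rightarrow> tm \<Rightarrow> 'a" where
  "eval_tm c v (Var i) = v ! i"
| "eval_tm c v (Cst j) = c j"
| "eval_tm c v (Add s t) = eval_tm c v s + eval_tm c v t"
| "eval_tm c v (Mul s t) = eval_tm c v s * eval_tm c v t"

fun vars_tm :: "tm \<Rightarrow> nat set" where
  "vars_tm (Var i) = {i}"
| "vars_tm (Cst j) = {}"
| "vars_tm (Add s t) = vars_tm s \<union> vars_tm t"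
| "vars_tm (Mul s t) = vars_tm s \<union> vars_tm t"

fun csts_tm :: "tm \<Rightarrow> nat set" where
  "csts_tm (Var i) = {}"
| "csts_tm (Cst j) = {j}"
| "csts_tm (Add s t) = csts_tm s \<union> csts_tm t"
| "csts_tm (Mul s t) = csts_tm s \<union> csts_tm t"

text \<open>A Diophantine definition is a triple (k, m, eqs): variables 0..k-1 are the
  free variables x, variables k..k+m-1 are the existentially quantified y, and
  eqs is the list of basic formulas (equations) in the conjunction.\<close>

type_synonym ddef = "nat \<times> nat \<times> (tm \<times> tm) list"

definition wf_ddef :: "nat \<Rightarrow> ddef \<Rightarrow> bool" where
  "wf_ddef nc d = (case d of (k, m, eqs) \<Rightarrow>
     (\<forall>(s,t)\<in>set eqs. vars_tm s \<union> vars_tm t \<subseteq> {..<k+m} \<and> csts_tm s \<union> csts_tm t \<subseteq> {..<nc}))"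

text \<open>The subset of R^k (tuples as lists of length k) defined by d, in the structure
  whose universe is the whole type and whose constants are interpreted by c.\<close>

definition dioph_set :: "(nat \<Rightarrow> 'a::{plus,times}) \<Rightarrow> ddef \<Rightarrow> 'a list set" where
  "dioph_set c d = (case d of (k, m, eqs) \<Rightarrow>
     {xs. length xs = k \<and> (\<exists>ys. length ys = m \<and>
        (\<forall>(s,t)\<in>set eqs. eval_tm c (xs @ ys) s = eval_tm c (xs @ ys) t))})"

definition is_dioph :: "(nat \<Rightarrow> 'a::{plus,times}) \<Rightarrow> nat \<Rightarrow> nat \<Rightarrow> 'a list set \<Rightarrow> bool" where
  "is_dioph c nc k S = (S \<subseteq> {xs. length xs = k} \<and>
     (\<exists>m eqs. wf_ddef nc (k, m, eqs) \<and> S = dioph_set c (k, m, eqs)))"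

definition dioph_map ::
  "(nat \<Rightarrow> 'a::{plus,times}) \<Rightarrow> nat \<Rightarrow> (nat \<Rightarrow> 'b::{plus,times}) \<Rightarrow> nat \<Rightarrow> ('a \<Rightarrow> 'b) \<Rightarrow> bool" where
  "dioph_map c1 n1 c2 n2 f =
     (\<forall>k S. is_dioph c1 n1 k S \<longrightarrow> is_dioph c2 n2 k (map f ` S))"

fun enc_tm :: "tm \<Rightarrow> nat" where
  "enc_tm (Var i) = 4 * i"
| "enc_tm (Cst j) = 4 * j + 1"
| "enc_tm (Add s t) = 4 * prod_encode (enc_tm s, enc_tm t) + 2"
| "enc_tm (Mul s t) = 4 * prod_encode (enc_tm s, enc_tm t) + 3"

fun enc_eqs :: "(tm \<times> tm) list \<Rightarrow> nat" where
  "enc_eqs [] = 0"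
| "enc_eqs ((s,t) # es) = Suc (prod_encode (prod_encode (enc_tm s, enc_tm t), enc_eqs es))"

definition enc_ddef :: "ddef \<Rightarrow> nat" where
  "enc_ddef d = (case d of (k, m, eqs) \<Rightarrow> prod_encode (k, prod_encode (m, enc_eqs eqs)))"

datatype recf = Zer | SucF | Proj nat | Comp recf "recf list" | PrimRec recf recf | Minim recf

inductive rf_eval :: "recf \<Rightarrow> nat list \<Rightarrow> nat \<Rightarrow> bool" where
  rf_zer: "rf_eval Zer xs 0"
| rf_suc: "rf_eval SucF (x # xs) (Suc x)"
| rf_proj: "i < length xs \<Longrightarrow> rf_eval (Proj i) xs (xs ! i)"
| rf_comp: "list_all2 (\<lambda>g y. rf_eval g xs y) gs ys \<Longrightarrow> rf_eval f ys z \<Longrightarrow> rf_eval (Comp f gs) xs z"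
| rf_pr0: "rf_eval f xs y \<Longrightarrow> rf_eval (PrimRec f g) (0 # xs) y"
| rf_prS: "rf_eval (PrimRec f g) (n # xs) y \<Longrightarrow> rf_eval g (y # n # xs) z
           \<Longrightarrow> rf_eval (PrimRec f g) (Suc n # xs) z"
| rf_min: "rf_eval f (n # xs) 0 \<Longrightarrow> (\<forall>i<n. \<exists>y. 0 < y \<and> rf_eval f (i # xs) y)
           \<Longrightarrow> rf_eval (Minim f) xs n"

definition computable :: "(nat \<Rightarrow> nat) \<Rightarrow> bool" where
  "computable f = (\<exists>r. \<forall>n. rf_eval r [n] (f n))"

definition effective_dioph_map ::
  "(nat \<Rightarrow> 'a::{plus,times}) \<Rightarrow> nat \<Rightarrow> (nat \<Rightarrow> 'b::{plus,times}) \<Rightarrow> nat \<Rightarrow> ('a \<Rightarrow> 'b) \<Rightarrow> bool" where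
  "effective_dioph_map c1 n1 c2 n2 f =
     (\<exists>g. computable g \<and>
        (\<forall>d. wf_ddef n1 d \<longrightarrow>
           (\<exists>d'. g (enc_ddef d) = enc_ddef d' \<and> wf_ddef n2 d' \<and> fst d' = fst d \<and>
                 dioph_set c2 d' = map f ` dioph_set c1 d)))"

definition twisted_polys :: "('k \<Rightarrow> 'd::ring_1) \<Rightarrow> 'd \<Rightarrow> 'd set" where
  "twisted_polys e t = {(\<Sum>i<n. e (c i) * t ^ i) | c n. True}"

text \<open>D (with field embedding e and element t = \<tau>) is a left division ring of fractions
  of K{\<tau>} (\<tau> a = a^q \<tau>): the subring generated by e(K) and t is a copy of the twisted
  polynomial ring (t is "free" over e(K)), and every element of D is b^{-1} a with
  a, b in that copy.  This characterises K(\<tau>) up to isomorphism.\<close>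

definition is_left_twisted_fraction_ring :: "nat \<Rightarrow> ('k::field \<Rightarrow> 'd::division_ring) \<Rightarrow> 'd \<Rightarrow> bool" where
  "is_left_twisted_fraction_ring q e t =
     (inj e \<and> e 1 = 1 \<and> (\<forall>a b. e (a + b) = e a + e b) \<and> (\<forall>a b. e (a * b) = e a * e b) \<and>
      (\<forall>a. t * e a = e (a ^ q) * t) \<and>
      (\<forall>c n. (\<Sum>i<n. e (c i) * t ^ i) = 0 \<longrightarrow> (\<forall>i<n. c i = 0)) \<and>
      (\<forall>x. \<exists>a b. a \<in> twisted_polys e t \<and> b \<in> twisted_polys e t \<and> b \<noteq> 0 \<and> x = inverse b * a))"

text \<open>\<phi> : A \<rightarrow> K{\<tau>} \<subseteq> D, the F_q-algebra homomorphism with \<phi>_T = \<iota>(T) + \<tau>.\<close>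

definition carlitz :: "('q::field poly \<Rightarrow> 'k) \<Rightarrow> ('k \<Rightarrow> 'd::ring_1) \<Rightarrow> 'd \<Rightarrow> 'q poly \<Rightarrow> 'd" where
  "carlitz \<iota> e t a = (\<Sum>i\<le>degree a. e (\<iota> [:coeff a i:]) * (e (\<iota> [:0, 1:]) + t) ^ i)"

definition carlitz_F :: "('q::field poly \<Rightarrow> 'k) \<Rightarrow> ('k \<Rightarrow> 'd::division_ring) \<Rightarrow> 'd \<Rightarrow> 'q poly fract \<Rightarrow> 'd" where
  "carlitz_F \<iota> e t x = (let (a, b) = (SOME (a, b). b \<noteq> 0 \<and> x = Fract a b)
                        in inverse (carlitz \<iota> e t b) * carlitz \<iota> e t a)"

definition consts_F :: "nat \<Rightarrow> 'q::field poly fract" where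
  "consts_F j = (if j = 0 then 0 else if j = 1 then 1 else Fract [:0, 1:] 1)"

definition consts_D :: "('q::field poly \<Rightarrow> 'k) \<Rightarrow> ('k \<Rightarrow> 'd::ring_1) \<Rightarrow> 'd \<Rightarrow> nat \<Rightarrow> 'd" where
  "consts_D \<iota> e t j = (if j = 0 then 0 else if j = 1 then 1 else if j = 2 then e (\<iota> [:0, 1:]) else t)"

end

theory Submission
  imports Defs
begin


definition rc :: "nat \<Rightarrow> (nat list \<Rightarrow> nat) \<Rightarrow> bool" where
  "rc k f = (\<exists>r. \<forall>xs. length xs = k \<longrightarrow> rf_eval r xs (f xs))"

lemma rc_zero: "rc k (\<lambda>xs. 0)"
  unfolding rc_def by (rule exI[of _ Zer]) (auto intro: rf_zer)

lemma rc_proj: "i < k \<Longrightarrow> rc k (\<lambda>xs. xs ! i)"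
  unfolding rc_def by (rule exI[of _ "Proj i"]) (auto intro: rf_proj)

lemma rc_list_ex:
  assumes "\<forall>G\<in>set Gs. rc k G"
  shows "\<exists>gs. list_all2 (\<lambda>g G. \<forall>xs. length xs = k \<longrightarrow> rf_eval g xs (G xs)) gs Gs"
  using assms
proof (induction Gs)
  case Nil then show ?case by auto
next
  case (Cons G Gs)
  then obtain gs where gs: "list_all2 (\<lambda>g G. \<forall>xs. length xs = k \<longrightarrow> rf_eval g xs (G xs)) gs Gs" by auto
  from Cons.prems obtain g where "\<forall>xs. length xs = k \<longrightarrow> rf_eval g xs (G xs)" unfolding rc_def by auto
  with gs show ?case by (intro exI[of _ "g # gs"]) auto
qed

lemma rc_comp_list:
  assumes "rc (length Gs) F" "\<forall>G\<in>set Gs. rc k G"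
  shows "rc k (\<lambda>xs. F (map (\<lambda>G. G xs) Gs))"
proof -
  obtain f where f: "\<forall>ys. length ys = length Gs \<longrightarrow> rf_eval f ys (F ys)" using assms(1) unfolding rc_def by auto
  obtain gs where gs: "list_all2 (\<lambda>g G. \<forall>xs. length xs = k \<longrightarrow> rf_eval g xs (G xs)) gs Gs"
    using rc_list_ex[OF assms(2)] by auto
  show ?thesis unfolding rc_def
  proof (intro exI[of _ "Comp f gs"] allI impI)
    fix xs :: "nat list" assume len: "length xs = k"
    have "list_all2 (\<lambda>g y. rf_eval g xs y) gs (map (\<lambda>G. G xs) Gs)"
      unfolding list_all2_map2 using gs by (rule list_all2_mono) (simp add: len)
    then show "rf_eval (Comp f gs) xs (F (map (\<lambda>G. G xs) Gs))"
      by (rule rf_comp) (use f in simp)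
  qed
qed

lemma rc_comp1:
  assumes "rc 1 (\<lambda>ys. F (ys ! 0))" "rc k g"
  shows "rc k (\<lambda>xs. F (g xs))"
  using rc_comp_list[of "[g]" "\<lambda>ys. F (ys ! 0)" k] assms by simp

lemma rc_comp2:
  assumes "rc 2 (\<lambda>ys. F (ys ! 0) (ys ! 1))" "rc k g" "rc k h"
  shows "rc k (\<lambda>xs. F (g xs) (h xs))"
  using rc_comp_list[of "[g, h]" "\<lambda>ys. F (ys ! 0) (ys ! 1)" k] assms by (simp add: numeral_2_eq_2)

lemma rc_comp3:
  assumes "rc 3 (\<lambda>ys. F (ys ! 0) (ys ! 1) (ys ! 2))" "rc k g" "rc k h" "rc k l"
  shows "rc k (\<lambda>xs. F (g xs) (h xs) (l xs))"
  using rc_comp_list[of "[g, h, l]" "\<lambda>ys. F (ys ! 0) (ys ! 1) (ys ! 2)" k] assms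
  by (simp add: numeral_3_eq_3)

lemma rc_suc1: "rc 1 (\<lambda>ys. Suc (ys ! 0))"
  unfolding rc_def
proof (intro exI[of _ SucF] allI impI)
  fix xs :: "nat list" assume "length xs = 1"
  then obtain x where "xs = [x]" by (cases xs) auto
  then show "rf_eval SucF xs (Suc (xs ! 0))" by (auto intro: rf_suc)
qed

lemma rc_Suc: "rc k g \<Longrightarrow> rc k (\<lambda>xs. Suc (g xs))"
  using rc_comp1[OF rc_suc1] .

lemma rc_const: "rc k (\<lambda>xs. c)"
proof (induction c)
  case 0 then show ?case by (rule rc_zero)
next
  case (Suc c) then show ?case using rc_Suc[of k "\<lambda>xs. c"] by simp
qed

lemma rc_id1: "rc 1 (\<lambda>xs. xs ! 0)" by (rule rc_proj) simp

lemma rc_ext: "rc k f \<Longrightarrow> (\<And>xs. length xs = k \<Longrightarrow> f xs = g xs) \<Longrightarrow> rc k g"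
  unfolding rc_def by auto

lemma rc_primrec:
  assumes "rc k F" "rc (Suc (Suc k)) G"
  shows "rc (Suc k) (\<lambda>xs. rec_nat (F (tl xs)) (\<lambda>n y. G (y # n # tl xs)) (hd xs))"
proof -
  obtain f where f: "\<forall>ys. length ys = k \<longrightarrow> rf_eval f ys (F ys)" using assms(1) unfolding rc_def by auto
  obtain g where g: "\<forall>ys. length ys = Suc (Suc k) \<longrightarrow> rf_eval g ys (G ys)" using assms(2) unfolding rc_def by auto
  have *: "rf_eval (PrimRec f g) (n # ys) (rec_nat (F ys) (\<lambda>n y. G (y # n # ys)) n)" if "length ys = k" for n ys
  proof (induction n)
    case 0 then show ?case using f that by (simp add: rf_pr0)
  next
    case (Suc n)
    have "rf_eval g (rec_nat (F ys) (\<lambda>n y. G (y # n # ys)) n # n # ys) (G (rec_nat (F ys) (\<lambda>n y. G (y # n # ys)) n # n # ys))"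
      using g that by simp
    then show ?case using rf_prS[OF Suc.IH] by simp
  qed
  show ?thesis unfolding rc_def
  proof (intro exI[of _ "PrimRec f g"] allI impI)
    fix xs :: "nat list" assume "length xs = Suc k"
    then obtain n ys where "xs = n # ys" "length ys = k" by (cases xs) auto
    then show "rf_eval (PrimRec f g) xs (rec_nat (F (tl xs)) (\<lambda>n y. G (y # n # tl xs)) (hd xs))"
      using *[of ys n] by simp
  qed
qed

lemma rc_minim:
  assumes "rc (Suc k) F" "\<And>xs. length xs = k \<Longrightarrow> \<exists>n. F (n # xs) = 0"
  shows "rc k (\<lambda>xs. LEAST n. F (n # xs) = 0)"
proof -
  obtain f where f: "\<forall>ys. length ys = Suc k \<longrightarrow> rf_eval f ys (F ys)" using assms(1) unfolding rc_def by auto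
  show ?thesis unfolding rc_def
  proof (intro exI[of _ "Minim f"] allI impI)
    fix xs :: "nat list" assume len: "length xs = k"
    let ?n = "LEAST n. F (n # xs) = 0"
    obtain n0 where "F (n0 # xs) = 0" using assms(2)[OF len] by blast
    then have z: "F (?n # xs) = 0" by (rule LeastI)
    have nz: "\<forall>i<?n. \<exists>y. 0 < y \<and> rf_eval f (i # xs) y"
    proof (intro allI impI)
      fix i assume "i < ?n"
      then have "F (i # xs) \<noteq> 0" by (rule not_less_Least)
      then show "\<exists>y. 0 < y \<and> rf_eval f (i # xs) y" using f len by (intro exI[of _ "F (i # xs)"]) simp
    qed
    have "rf_eval f (?n # xs) (F (?n # xs))" using f len by simp
    then have "rf_eval f (?n # xs) 0" using z by simp
    then show "rf_eval (Minim f) xs ?n" using nz by (rule rf_min)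
  qed
qed


lemma len2: "length xs = 2 \<Longrightarrow> xs = [xs ! 0, xs ! 1]"
  by (cases xs; cases "tl xs"; auto)

lemma len1: "length xs = 1 \<Longrightarrow> xs = [xs ! 0]"
  by (cases xs; auto)

lemma len3: "length xs = 3 \<Longrightarrow> xs = [xs ! 0, xs ! 1, xs ! 2]"
  by (cases xs; cases "tl xs"; cases "tl (tl xs)"; auto simp: numeral_3_eq_3)

lemma rc_prim1:
  assumes h0: "h 0 = c" and hS: "\<And>n. h (Suc n) = G (h n) n"
    and G: "rc 2 (\<lambda>ys. G (ys ! 0) (ys ! 1))"
  shows "rc 1 (\<lambda>ys. h (ys ! 0))"
proof -
  have G': "rc (Suc (Suc 0)) (\<lambda>ys. G (ys ! 0) (ys ! 1))" using G by (simp add: numeral_2_eq_2)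
  have A: "rc (Suc 0) (\<lambda>xs. rec_nat ((\<lambda>_. c) (tl xs)) (\<lambda>n y. (\<lambda>ys. G (ys ! 0) (ys ! 1)) (y # n # tl xs)) (hd xs))"
    by (rule rc_primrec[OF rc_const G'])
  have r: "rec_nat c (\<lambda>n y. G y n) a = h a" for a by (induction a) (simp_all add: h0 hS)
  have "rc (Suc 0) (\<lambda>ys. h (ys ! 0))"
    by (rule rc_ext[OF A]) (auto simp: r length_Suc_conv)
  then show ?thesis by simp
qed

lemma rc_prim2:
  assumes h0: "\<And>y. h 0 y = F y" and hS: "\<And>n y. h (Suc n) y = G (h n y) n y"
    and F: "rc 1 (\<lambda>ys. F (ys ! 0))" and G: "rc 3 (\<lambda>ys. G (ys ! 0) (ys ! 1) (ys ! 2))"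
  shows "rc 2 (\<lambda>ys. h (ys ! 0) (ys ! 1))"
proof -
  have G': "rc (Suc (Suc (Suc 0))) (\<lambda>ys. G (ys ! 0) (ys ! 1) (ys ! 2))" using G by (simp add: numeral_3_eq_3)
  have F': "rc (Suc 0) (\<lambda>ys. F (ys ! 0))" using F by simp
  have "rc (Suc (Suc 0)) (\<lambda>xs. rec_nat ((\<lambda>ys. F (ys ! 0)) (tl xs)) (\<lambda>n y. (\<lambda>ys. G (ys ! 0) (ys ! 1) (ys ! 2)) (y # n # tl xs)) (hd xs))"
    by (rule rc_primrec[OF F' G'])
  then have "rc (Suc (Suc 0)) (\<lambda>ys. h (ys ! 0) (ys ! 1))"
  proof (rule rc_ext)
    fix xs :: "nat list" assume "length xs = Suc (Suc 0)"
    then obtain a b where xs: "xs = [a, b]" by (cases xs; cases "tl xs") auto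
    have "rec_nat (F b) (\<lambda>n y. G y n b) a = h a b" by (induction a) (simp_all add: h0 hS)
    then show "rec_nat ((\<lambda>ys. F (ys ! 0)) (tl xs)) (\<lambda>n y. (\<lambda>ys. G (ys ! 0) (ys ! 1) (ys ! 2)) (y # n # tl xs)) (hd xs) = h (xs ! 0) (xs ! 1)"
      by (simp add: xs)
  qed
  then show ?thesis by (simp add: numeral_2_eq_2)
qed

lemma rc_p0: "0 < k \<Longrightarrow> rc k (\<lambda>xs. xs ! 0)" by (rule rc_proj)
lemma rc_p1: "1 < k \<Longrightarrow> rc k (\<lambda>xs. xs ! 1)" by (rule rc_proj)
lemma rc_p2: "2 < k \<Longrightarrow> rc k (\<lambda>xs. xs ! 2)" by (rule rc_proj)

lemma rc_add2: "rc 2 (\<lambda>ys. ys ! 0 + ys ! 1)"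
proof (rule rc_prim2[where F = "\<lambda>y. y" and G = "\<lambda>r n y. Suc r"])
  show "rc 1 (\<lambda>ys. ys ! 0)" by (rule rc_proj) simp
  show "rc 3 (\<lambda>ys. Suc (ys ! 0))" by (rule rc_Suc, rule rc_proj) simp
qed auto

lemma rc_add: "rc k f \<Longrightarrow> rc k g \<Longrightarrow> rc k (\<lambda>xs. f xs + g xs)"
  by (rule rc_comp2[OF rc_add2])

lemma rc_mult2: "rc 2 (\<lambda>ys. ys ! 0 * ys ! 1)"
proof (rule rc_prim2[where F = "\<lambda>y. 0" and G = "\<lambda>r n y. r + y"])
  show "rc 1 (\<lambda>ys. 0)" by (rule rc_const)
  show "rc 3 (\<lambda>ys. ys ! 0 + ys ! 2)" by (intro rc_add rc_proj) simp_all
qed auto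

lemma rc_mult: "rc k f \<Longrightarrow> rc k g \<Longrightarrow> rc k (\<lambda>xs. f xs * g xs)"
  by (rule rc_comp2[OF rc_mult2])

lemma rc_pred1: "rc 1 (\<lambda>ys. ys ! 0 - 1)"
  by (rule rc_prim1[where c = 0 and G = "\<lambda>r n. n"]) (auto intro: rc_proj)

lemma rc_pred: "rc k f \<Longrightarrow> rc k (\<lambda>xs. f xs - 1)"
  by (rule rc_comp1[OF rc_pred1])

lemma rc_monus_rev: "rc 2 (\<lambda>ys. ys ! 1 - ys ! 0)"
proof (rule rc_prim2[where F = "\<lambda>y. y" and G = "\<lambda>r n y. r - 1" and h = "\<lambda>a b. b - a"])
  show "rc 1 (\<lambda>ys. ys ! 0)" by (rule rc_proj) simp
  show "rc 3 (\<lambda>ys. ys ! 0 - 1)" by (rule rc_pred, rule rc_proj) simp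
qed auto

lemma rc_sub: "rc k f \<Longrightarrow> rc k g \<Longrightarrow> rc k (\<lambda>xs. f xs - g xs)"
  by (rule rc_comp2[OF rc_monus_rev])

lemma rc_if0: "rc k c \<Longrightarrow> rc k f \<Longrightarrow> rc k g \<Longrightarrow> rc k (\<lambda>xs. if c xs = 0 then f xs else g xs)"
proof -
  assume c: "rc k c" and f: "rc k f" and g: "rc k g"
  have "rc k (\<lambda>xs. (1 - c xs) * f xs + (1 - (1 - c xs)) * g xs)"
    by (intro rc_add rc_mult rc_sub c f g rc_const)
  then show ?thesis by (rule rc_ext) auto
qed

lemma rc_ifeq: "rc k a \<Longrightarrow> rc k b \<Longrightarrow> rc k f \<Longrightarrow> rc k g \<Longrightarrow> rc k (\<lambda>xs. if a xs = b xs then f xs else g xs)"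
proof -
  assume a: "rc k a" and b: "rc k b" and f: "rc k f" and g: "rc k g"
  have "rc k (\<lambda>xs. if (a xs - b xs) + (b xs - a xs) = 0 then f xs else g xs)"
    by (intro rc_if0 rc_add rc_sub a b f g)
  then show ?thesis by (rule rc_ext) auto
qed

lemma rc_div_const: "0 < c \<Longrightarrow> rc k f \<Longrightarrow> rc k (\<lambda>xs. f xs div c)"
proof -
  assume c: "0 < c" and f: "rc k f"
  have m: "rc (Suc 0) (\<lambda>xs. LEAST q. Suc (xs ! 0) - c * Suc q = 0)"
  proof -
    have "rc 1 (\<lambda>xs. LEAST q. ((\<lambda>ys. Suc (ys ! 1) - c * Suc (ys ! 0)) (q # xs)) = 0)"
    proof (rule rc_minim)
      show "rc (Suc 1) (\<lambda>ys. Suc (ys ! 1) - c * Suc (ys ! 0))"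
        by (intro rc_sub rc_Suc rc_mult rc_const rc_proj) simp_all
      fix xs :: "nat list" assume "length xs = 1"
      show "\<exists>n. Suc (((n::nat) # xs) ! 1) - c * Suc ((n # xs) ! 0) = 0"
      proof (intro exI[of _ "xs ! 0"])
        have "xs ! 0 \<le> c * (xs ! 0)" using c by simp
        then have "Suc (xs ! 0) \<le> c * Suc (xs ! 0)" using c unfolding mult_Suc_right by linarith
        then show "Suc (((xs ! 0) # xs) ! 1) - c * Suc ((xs ! 0 # xs) ! 0) = 0" by simp
      qed
    qed
    then show ?thesis by simp
  qed
  have d: "rc 1 (\<lambda>xs. xs ! 0 div c)"
  proof (rule rc_ext[OF m[unfolded One_nat_def[symmetric]]])
    fix xs :: "nat list" assume "length xs = 1"
    let ?n = "xs ! 0"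
    have "(LEAST q. Suc ?n - c * Suc q = 0) = ?n div c"
    proof (rule Least_equality)
      show "Suc ?n - c * Suc (?n div c) = 0"
      proof -
        have "?n = c * (?n div c) + ?n mod c" by simp
        moreover have "?n mod c < c" using c by simp
        ultimately have "Suc ?n \<le> c * Suc (?n div c)" unfolding mult_Suc_right by linarith
        then show ?thesis by simp
      qed
      fix y assume "Suc ?n - c * Suc y = 0"
      then have "?n < c * Suc y" by simp
      then have "?n div c < Suc y" using c by (simp add: div_less_iff_less_mult mult.commute)
      then show "?n div c \<le> y" by simp
    qed
    then show "(LEAST q. Suc (xs ! 0) - c * Suc q = 0) = xs ! 0 div c" .
  qed
  show ?thesis by (rule rc_comp1[OF d f])
qed

lemma rc_mod_const: "0 < c \<Longrightarrow> rc k f \<Longrightarrow> rc k (\<lambda>xs. f xs mod c)"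
proof -
  assume c: "0 < c" and f: "rc k f"
  have "rc k (\<lambda>xs. f xs - c * (f xs div c))" by (intro rc_sub rc_mult rc_const rc_div_const c f)
  then show ?thesis by (rule rc_ext) (simp add: minus_mult_div_eq_mod)
qed


lemma rc_tri1: "rc 1 (\<lambda>ys. triangle (ys ! 0))"
  by (rule rc_prim1[where c = 0 and G = "\<lambda>r n. r + Suc n"]) (auto intro!: rc_add rc_Suc rc_proj)

lemma rc_tri: "rc k f \<Longrightarrow> rc k (\<lambda>xs. triangle (f xs))"
  by (rule rc_comp1[OF rc_tri1])

lemma rc_pe: "rc k f \<Longrightarrow> rc k g \<Longrightarrow> rc k (\<lambda>xs. prod_encode (f xs, g xs))"
proof -
  assume f: "rc k f" and g: "rc k g"
  have "rc k (\<lambda>xs. triangle (f xs + g xs) + f xs)" by (intro rc_add rc_tri f g)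
  then show ?thesis by (rule rc_ext) (simp add: prod_encode_def)
qed

lemma pd_char:
  assumes "triangle s \<le> n" "n < triangle (Suc s)"
  shows "prod_decode n = (n - triangle s, s - (n - triangle s))"
proof -
  have "n - triangle s \<le> s" using assms by simp
  then have "n = prod_encode (n - triangle s, s - (n - triangle s))"
    using assms by (simp add: prod_encode_def)
  then show ?thesis by (metis prod_encode_inverse)
qed

definition pds :: "nat \<Rightarrow> nat" where
  "pds n = (LEAST s. Suc n - triangle (Suc s) = 0)"

lemma pds_props: "triangle (pds n) \<le> n \<and> n < triangle (Suc (pds n))"
proof -
  have ex: "Suc n - triangle (Suc n) = 0" by simp
  have a: "Suc n - triangle (Suc (pds n)) = 0" unfolding pds_def by (rule LeastI[where P = "\<lambda>s. Suc n - triangle (Suc s) = 0", OF ex])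
  have b: "triangle (pds n) \<le> n"
  proof (cases "pds n")
    case 0 then show ?thesis by simp
  next
    case (Suc s)
    then have "s < pds n" by simp
    then have "Suc n - triangle (Suc s) \<noteq> 0" unfolding pds_def by (rule not_less_Least)
    then show ?thesis using Suc by simp
  qed
  show ?thesis using a b by simp
qed

lemma pd_pds: "prod_decode n = (n - triangle (pds n), pds n - (n - triangle (pds n)))"
  using pds_props[of n] by (intro pd_char) auto

lemma rc_pds1: "rc 1 (\<lambda>ys. pds (ys ! 0))"
proof -
  have "rc 1 (\<lambda>xs. LEAST s. ((\<lambda>ys. Suc (ys ! 1) - triangle (Suc (ys ! 0))) (s # xs)) = 0)"
  proof (rule rc_minim)
    show "rc (Suc 1) (\<lambda>ys. Suc (ys ! 1) - triangle (Suc (ys ! 0)))"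
      by (intro rc_sub rc_Suc rc_tri rc_proj) simp_all
    fix xs :: "nat list" assume "length xs = 1"
    show "\<exists>n. Suc ((n # xs) ! 1) - triangle (Suc ((n # xs) ! 0)) = 0"
      by (intro exI[of _ "xs ! 0"]) simp
  qed
  then show ?thesis by (simp add: pds_def)
qed

lemma rc_fst: "rc k f \<Longrightarrow> rc k (\<lambda>xs. fst (prod_decode (f xs)))"
proof -
  assume f: "rc k f"
  have "rc k (\<lambda>xs. f xs - triangle (pds (f xs)))" by (intro rc_sub rc_tri rc_comp1[OF rc_pds1] f)
  then show ?thesis by (rule rc_ext) (simp add: pd_pds)
qed

lemma rc_snd: "rc k f \<Longrightarrow> rc k (\<lambda>xs. snd (prod_decode (f xs)))"
proof -
  assume f: "rc k f"
  have "rc k (\<lambda>xs. pds (f xs) - (f xs - triangle (pds (f xs))))" by (intro rc_sub rc_tri rc_comp1[OF rc_pds1] f)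
  then show ?thesis by (rule rc_ext) (simp add: pd_pds)
qed

definition sd :: "nat \<Rightarrow> nat" where "sd h = snd (prod_decode h)"

lemma rc_iter2: "rc 2 (\<lambda>ys. (sd ^^ (ys ! 0)) (ys ! 1))"
  by (rule rc_prim2[where F = "\<lambda>y. y" and G = "\<lambda>r n y. sd r"])
     (auto simp: sd_def intro!: rc_snd rc_proj)

lemma rc_iter: "rc k f \<Longrightarrow> rc k g \<Longrightarrow> rc k (\<lambda>xs. (sd ^^ f xs) (g xs))"
  by (rule rc_comp2[OF rc_iter2])

primrec hist :: "(nat \<Rightarrow> nat) \<Rightarrow> nat \<Rightarrow> nat" where
  "hist f 0 = 0"
| "hist f (Suc n) = prod_encode (f n, hist f n)"

definition lk :: "nat \<Rightarrow> nat \<Rightarrow> nat \<Rightarrow> nat" where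
  "lk h n i = fst (prod_decode ((sd ^^ (n - Suc i)) h))"

lemma rc_lk: "rc k h \<Longrightarrow> rc k n \<Longrightarrow> rc k i \<Longrightarrow> rc k (\<lambda>xs. lk (h xs) (n xs) (i xs))"
  unfolding lk_def by (intro rc_fst rc_iter rc_sub rc_Suc)

lemma hist_lookup: "i < n \<Longrightarrow> lk (hist f n) n i = f i"
proof (induction n)
  case 0 then show ?case by simp
next
  case (Suc m)
  show ?case
  proof (cases "i = m")
    case True then show ?thesis by (simp add: lk_def)
  next
    case False
    then have i: "i < m" using Suc.prems by simp
    then have "Suc m - Suc i = Suc (m - Suc i)" by simp
    then have "lk (hist f (Suc m)) (Suc m) i = lk (hist f m) m i"
      unfolding lk_def by (simp only: funpow_Suc_right o_apply) (simp add: sd_def)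
    then show ?thesis using Suc.IH[OF i] by simp
  qed
qed

lemma rc_cov:
  assumes S: "rc 2 (\<lambda>ys. S (ys ! 0) (ys ! 1))" and f: "\<And>n. f n = S n (hist f n)"
  shows "rc 1 (\<lambda>ys. f (ys ! 0))"
proof -
  have H: "rc 1 (\<lambda>ys. hist f (ys ! 0))"
  proof (rule rc_prim1[where c = 0 and G = "\<lambda>y n. prod_encode (S n y, y)"])
    show "rc 2 (\<lambda>ys. prod_encode (S (ys ! 1) (ys ! 0), ys ! 0))"
      by (intro rc_pe rc_comp2[OF S] rc_proj) simp_all
  qed (simp_all add: f[symmetric])
  have "rc 1 (\<lambda>ys. fst (prod_decode (hist f (Suc (ys ! 0)))))"
    by (intro rc_fst rc_comp1[OF H] rc_Suc rc_proj) simp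
  then show ?thesis by (rule rc_ext) simp
qed


definition phiT :: tm where "phiT = Add (Cst 2) (Cst 3)"
definition cphi :: nat where "cphi = enc_tm phiT"

fun trt :: "tm \<Rightarrow> tm" where
  "trt (Var i) = Var i"
| "trt (Cst j) = (if j = 2 then phiT else Cst j)"
| "trt (Add s t) = Add (trt s) (trt t)"
| "trt (Mul s t) = Mul (trt s) (trt t)"

lemma fst_pd_le: "fst (prod_decode m) \<le> m"
  by (metis le_prod_encode_1 prod_decode_inverse prod.collapse)
lemma snd_pd_le: "snd (prod_decode m) \<le> m"
  by (metis le_prod_encode_2 prod_decode_inverse prod.collapse)

lemma div4_lt: "n mod 4 = 2 \<or> n mod 4 = 3 \<Longrightarrow> n div 4 < (n::nat)"
  by (cases "n = 0") auto

function trc :: "nat \<Rightarrow> nat" where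
  "trc n = (if n mod 4 = 2 \<or> n mod 4 = 3
     then 4 * prod_encode (trc (fst (prod_decode (n div 4))), trc (snd (prod_decode (n div 4)))) + n mod 4
     else if n = 9 then cphi else n)"
  by pat_completeness auto
termination
  by (relation "measure id")
     (auto intro: le_less_trans[OF fst_pd_le div4_lt] le_less_trans[OF snd_pd_le div4_lt])

declare trc.simps[simp del]

lemma trc_2: "trc (4 * x + 2) = 4 * prod_encode (trc (fst (prod_decode x)), trc (snd (prod_decode x))) + 2"
proof -
  have a: "(4 * x + 2) mod 4 = 2" "(4 * x + 2) div 4 = x" by presburger+
  show ?thesis by (subst trc.simps) (simp only: a, simp)
qed

lemma trc_3: "trc (4 * x + 3) = 4 * prod_encode (trc (fst (prod_decode x)), trc (snd (prod_decode x))) + 3"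
proof -
  have a: "(4 * x + 3) mod 4 = 3" "(4 * x + 3) div 4 = x" by presburger+
  show ?thesis by (subst trc.simps) (simp only: a, simp)
qed

lemma trc_enc: "trc (enc_tm s) = enc_tm (trt s)"
proof (induction s)
  case (Var i)
  have "4 * i \<noteq> 9" by presburger
  then show ?case by (subst trc.simps) auto
next
  case (Cst j) then show ?case by (subst trc.simps) (auto simp: cphi_def)
next
  case (Add s t) then show ?case by (simp only: enc_tm.simps trt.simps trc_2) simp
next
  case (Mul s t) then show ?case by (simp only: enc_tm.simps trt.simps trc_3) simp
qed

definition S_trc :: "nat \<Rightarrow> nat \<Rightarrow> nat" where
  "S_trc n h = (if n mod 4 = 2 then 4 * prod_encode (lk h n (fst (prod_decode (n div 4))), lk h n (snd (prod_decode (n div 4)))) + 2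
     else if n mod 4 = 3 then 4 * prod_encode (lk h n (fst (prod_decode (n div 4))), lk h n (snd (prod_decode (n div 4)))) + 3
     else if n = 9 then cphi else n)"

lemma trc_S: "trc n = S_trc n (hist trc n)"
proof (cases "n mod 4 = 2 \<or> n mod 4 = 3")
  case True
  have a: "fst (prod_decode (n div 4)) < n" using le_less_trans[OF fst_pd_le div4_lt[OF True]] .
  have b: "snd (prod_decode (n div 4)) < n" using le_less_trans[OF snd_pd_le div4_lt[OF True]] .
  show ?thesis using True unfolding S_trc_def hist_lookup[OF a] hist_lookup[OF b]
    by (subst trc.simps) auto
next
  case False
  then show ?thesis unfolding S_trc_def by (subst trc.simps) auto
qed

lemmas rc_intros = rc_ifeq rc_add rc_mult rc_pe rc_fst rc_snd rc_lk rc_Suc rc_sub rc_proj rc_const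

lemma rc_trc1: "rc 1 (\<lambda>ys. trc (ys ! 0))"
proof (rule rc_cov[of S_trc trc, OF _ trc_S])
  show "rc 2 (\<lambda>ys. S_trc (ys ! 0) (ys ! 1))" unfolding S_trc_def
    by (intro rc_intros rc_div_const rc_mod_const) simp_all
qed

lemma rc_trc: "rc k f \<Longrightarrow> rc k (\<lambda>xs. trc (f xs))"
  by (rule rc_comp1[OF rc_trc1])

definition trEq :: "tm \<times> tm \<Rightarrow> tm \<times> tm" where "trEq e = (trt (fst e), trt (snd e))"
lemma trEq_pair[simp]: "trEq (s, t) = (trt s, trt t)" by (simp add: trEq_def)

function trl :: "nat \<Rightarrow> nat" where
  "trl n = (if n = 0 then 0 else Suc (prod_encode (prod_encode (trc (fst (prod_decode (fst (prod_decode (n - 1))))),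
       trc (snd (prod_decode (fst (prod_decode (n - 1)))))), trl (snd (prod_decode (n - 1))))))"
  by pat_completeness auto
termination
  by (relation "measure id") (auto intro: le_less_trans[OF snd_pd_le])

declare trl.simps[simp del]

lemma trl_enc: "trl (enc_eqs es) = enc_eqs (map trEq es)"
proof (induction es)
  case Nil then show ?case by (subst trl.simps) simp
next
  case (Cons e es)
  obtain s t where e: "e = (s, t)" by (cases e)
  show ?case using Cons by (subst trl.simps) (simp add: e trc_enc)
qed

definition S_trl :: "nat \<Rightarrow> nat \<Rightarrow> nat" where
  "S_trl n h = (if n = 0 then 0 else Suc (prod_encode (prod_encode (trc (fst (prod_decode (fst (prod_decode (n - 1))))),
       trc (snd (prod_decode (fst (prod_decode (n - 1)))))), lk h n (snd (prod_decode (n - 1))))))"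

lemma trl_S: "trl n = S_trl n (hist trl n)"
proof (cases "n = 0")
  case True then show ?thesis unfolding S_trl_def by (subst trl.simps) simp
next
  case False
  have a: "snd (prod_decode (n - 1)) < n" using False le_less_trans[OF snd_pd_le, of "n - 1" n] by simp
  show ?thesis using False unfolding S_trl_def hist_lookup[OF a] by (subst trl.simps) simp
qed

lemma rc_trl1: "rc 1 (\<lambda>ys. trl (ys ! 0))"
proof (rule rc_cov[of S_trl trl, OF _ trl_S])
  show "rc 2 (\<lambda>ys. S_trl (ys ! 0) (ys ! 1))" unfolding S_trl_def
    by (intro rc_if0 rc_intros rc_trc) simp_all
qed

primrec extras :: "nat \<Rightarrow> (tm \<times> tm) list" where
  "extras 0 = []"
| "extras (Suc j) = (Mul (Var j) phiT, Mul phiT (Var j)) # extras j"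

primrec ex :: "nat \<Rightarrow> nat \<Rightarrow> nat" where
  "ex 0 z = z"
| "ex (Suc j) z = Suc (prod_encode (prod_encode (4 * prod_encode (4 * j, cphi) + 3, 4 * prod_encode (cphi, 4 * j) + 3), ex j z))"

lemma ex_enc: "ex j (enc_eqs es) = enc_eqs (extras j @ es)"
  by (induction j) (simp_all add: cphi_def)

lemma rc_ex2: "rc 2 (\<lambda>ys. ex (ys ! 0) (ys ! 1))"
  by (rule rc_prim2[where F = "\<lambda>y. y" and G = "\<lambda>r n z. Suc (prod_encode (prod_encode (4 * prod_encode (4 * n, cphi) + 3, 4 * prod_encode (cphi, 4 * n) + 3), r))"])
     (simp_all, (intro rc_intros; simp)+)

definition trd :: "ddef \<Rightarrow> ddef" where
  "trd d = (case d of (k, m, eqs) \<Rightarrow> (k, m, extras (k + m) @ map trEq eqs))"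

definition gfun :: "nat \<Rightarrow> nat" where
  "gfun N = prod_encode (fst (prod_decode N), prod_encode (fst (prod_decode (snd (prod_decode N))),
     ex (fst (prod_decode N) + fst (prod_decode (snd (prod_decode N)))) (trl (snd (prod_decode (snd (prod_decode N)))))))"

lemma gfun_enc: "gfun (enc_ddef d) = enc_ddef (trd d)"
  by (cases d) (simp add: gfun_def enc_ddef_def trd_def trl_enc ex_enc)

lemma computable_gfun: "computable gfun"
proof -
  have "rc 1 (\<lambda>ys. gfun (ys ! 0))" unfolding gfun_def
    by (intro rc_intros rc_comp2[OF rc_ex2] rc_comp1[OF rc_trl1]) simp_all
  then obtain r where r: "\<forall>xs. length xs = 1 \<longrightarrow> rf_eval r xs (gfun (xs ! 0))" unfolding rc_def by blast
  show ?thesis unfolding computable_def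
  proof (intro exI[of _ r] allI)
    fix n show "rf_eval r [n] (gfun n)" using r[rule_format, of "[n]"] by simp
  qed
qed


lemma eval_trt:
  fixes \<phi> :: "'a::{plus,times} \<Rightarrow> 'b::{plus,times}"
  assumes add: "\<And>x y. \<phi> (x + y) = \<phi> x + \<phi> y" and mul: "\<And>x y. \<phi> (x * y) = \<phi> x * \<phi> y"
    and cst: "\<And>j. j < 3 \<Longrightarrow> \<phi> (cF j) = eval_tm cD [] (trt (Cst j))"
  shows "csts_tm s \<subseteq> {..<3} \<Longrightarrow> vars_tm s \<subseteq> {..<length v} \<Longrightarrow>
    eval_tm cD (map \<phi> v) (trt s) = \<phi> (eval_tm cF v s)"
proof (induction s)
  case (Var i) then show ?case by simp
next
  case (Cst j)
  then have "j < 3" by simp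
  then show ?case using cst[of j] by (auto simp: phiT_def)
next
  case (Add s t) then show ?case by (simp add: add)
next
  case (Mul s t) then show ?case by (simp add: mul)
qed

lemma set_extras: "set (extras n) = {(Mul (Var j) phiT, Mul phiT (Var j)) | j. j < n}"
  by (induction n) (auto simp: less_Suc_eq)

lemma wf_trd: "wf_ddef 3 d \<Longrightarrow> wf_ddef 4 (trd d) \<and> fst (trd d) = fst d"
proof -
  assume w: "wf_ddef 3 d"
  obtain k m eqs where d: "d = (k, m, eqs)" by (cases d)
  have vt: "vars_tm (trt s) = vars_tm s" for s by (induction s) (auto simp: phiT_def)
  have ct: "csts_tm s \<subseteq> {..<3} \<Longrightarrow> csts_tm (trt s) \<subseteq> {..<4}" for s by (induction s) (auto simp: phiT_def)
  have W: "vars_tm a \<union> vars_tm b \<subseteq> {..<k + m} \<and> csts_tm a \<union> csts_tm b \<subseteq> {..<3}" if "(a, b) \<in> set eqs" for a b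
  proof -
    have "\<forall>x\<in>set eqs. case x of (s, t) \<Rightarrow> vars_tm s \<union> vars_tm t \<subseteq> {..<k + m} \<and> csts_tm s \<union> csts_tm t \<subseteq> {..<3}"
      using w unfolding d wf_ddef_def by simp
    from bspec[OF this that] show ?thesis by simp
  qed
  have B: "vars_tm (trt a) \<union> vars_tm (trt b) \<subseteq> {..<k + m} \<and> csts_tm (trt a) \<union> csts_tm (trt b) \<subseteq> {..<4}" if "(a, b) \<in> set eqs" for a b
    using W[OF that] ct[of a] ct[of b] by (simp add: vt)
  show ?thesis unfolding d trd_def wf_ddef_def
    by (auto simp: set_extras phiT_def dest!: B)
qed

lemma dioph_trd:
  fixes \<phi> :: "'a::{plus,times} \<Rightarrow> 'b::{plus,times}"
  assumes add: "\<And>x y. \<phi> (x + y) = \<phi> x + \<phi> y" and mul: "\<And>x y. \<phi> (x * y) = \<phi> x * \<phi> y"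
    and cst: "\<And>j. j < 3 \<Longrightarrow> \<phi> (cF j) = eval_tm cD [] (trt (Cst j))"
    and inj: "inj \<phi>"
    and cen: "\<And>z. z * (cD 2 + cD 3) = (cD 2 + cD 3) * z \<longleftrightarrow> z \<in> range \<phi>"
    and w: "wf_ddef 3 d"
  shows "dioph_set cD (trd d) = map \<phi> ` dioph_set cF d"
proof -
  obtain k m eqs where d: "d = (k, m, eqs)" by (cases d)
  let ?P = "cD 2 + cD 3"
  have wq: "\<And>s t. (s, t) \<in> set eqs \<Longrightarrow> vars_tm s \<union> vars_tm t \<subseteq> {..<k+m} \<and> csts_tm s \<union> csts_tm t \<subseteq> {..<3}"
    using w unfolding d wf_ddef_def by auto
  have ev: "\<And>s v. csts_tm s \<subseteq> {..<3} \<Longrightarrow> vars_tm s \<subseteq> {..<length v} \<Longrightarrow>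
    eval_tm cD (map \<phi> v) (trt s) = \<phi> (eval_tm cF v s)"
    by (rule eval_trt[OF add mul cst]) auto
  show ?thesis
  proof
    show "map \<phi> ` dioph_set cF d \<subseteq> dioph_set cD (trd d)"
    proof
      fix xs' assume "xs' \<in> map \<phi> ` dioph_set cF d"
      then obtain xs ys where xs': "xs' = map \<phi> xs" and lx: "length xs = k" and ly: "length ys = m"
        and eq: "\<forall>(s,t)\<in>set eqs. eval_tm cF (xs @ ys) s = eval_tm cF (xs @ ys) t"
        unfolding d dioph_set_def by auto
      have "\<forall>(s,t)\<in>set (extras (k + m) @ map trEq eqs). eval_tm cD (xs' @ map \<phi> ys) s = eval_tm cD (xs' @ map \<phi> ys) t"
      proof (intro ballI, clarify)
        fix s t assume st: "(s, t) \<in> set (extras (k + m) @ map trEq eqs)"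
        have v: "xs' @ map \<phi> ys = map \<phi> (xs @ ys)" by (simp add: xs')
        show "eval_tm cD (xs' @ map \<phi> ys) s = eval_tm cD (xs' @ map \<phi> ys) t"
        proof (cases "(s, t) \<in> set (extras (k + m))")
          case True
          then obtain j where j: "j < k + m" "s = Mul (Var j) phiT" "t = Mul phiT (Var j)"
            by (auto simp: set_extras)
          have "(map \<phi> (xs @ ys)) ! j = \<phi> ((xs @ ys) ! j)" by (rule nth_map) (use j lx ly in simp)
          then have "(map \<phi> (xs @ ys)) ! j \<in> range \<phi>" by simp
          then have "(map \<phi> (xs @ ys)) ! j * ?P = ?P * (map \<phi> (xs @ ys)) ! j" using cen by blast
          then show ?thesis using j by (simp add: v phiT_def)
        next
          case False
          then obtain s0 t0 where st0: "(s0, t0) \<in> set eqs" "s = trt s0" "t = trt t0"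
            using st by (auto simp: trEq_def)
          have e0: "eval_tm cF (xs @ ys) s0 = eval_tm cF (xs @ ys) t0" using eq st0 by auto
          have e1: "eval_tm cD (map \<phi> (xs @ ys)) (trt s0) = \<phi> (eval_tm cF (xs @ ys) s0)"
            by (rule ev) (use wq[OF st0(1)] lx ly in auto)
          have e2: "eval_tm cD (map \<phi> (xs @ ys)) (trt t0) = \<phi> (eval_tm cF (xs @ ys) t0)"
            by (rule ev) (use wq[OF st0(1)] lx ly in auto)
          show ?thesis by (simp only: v st0(2,3) e1 e2 e0)
        qed
      qed
      then show "xs' \<in> dioph_set cD (trd d)"
        unfolding d trd_def dioph_set_def using lx ly xs'
        by (auto intro!: exI[of _ "map \<phi> ys"])
    qed
  next
    show "dioph_set cD (trd d) \<subseteq> map \<phi> ` dioph_set cF d"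
    proof
      fix xs' assume "xs' \<in> dioph_set cD (trd d)"
      then obtain ys' where lx: "length xs' = k" and ly: "length ys' = m"
        and eq: "\<forall>(s,t)\<in>set (extras (k + m) @ map trEq eqs). eval_tm cD (xs' @ ys') s = eval_tm cD (xs' @ ys') t"
        unfolding d trd_def dioph_set_def by auto
      let ?v = "xs' @ ys'"
      have inr: "?v ! j \<in> range \<phi>" if j: "j < k + m" for j
      proof -
        have "(Mul (Var j) phiT, Mul phiT (Var j)) \<in> set (extras (k + m) @ map trEq eqs)"
          using j by (auto simp: set_extras)
        then have "?v ! j * ?P = ?P * ?v ! j" using eq by (fastforce simp: phiT_def)
        then show ?thesis using cen by blast
      qed
      define w where "w = map (inv \<phi>) ?v"
      have vw: "?v = map \<phi> w"
      proof (rule nth_equalityI)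
        show "length ?v = length (map \<phi> w)" by (simp add: w_def)
        fix j assume j': "j < length ?v"
        then have "j < k + m" using lx ly by simp
        then have r: "?v ! j \<in> range \<phi>" by (rule inr)
        have "map \<phi> w ! j = \<phi> (w ! j)" by (rule nth_map) (use j' in \<open>simp add: w_def\<close>)
        moreover have "w ! j = inv \<phi> (?v ! j)" unfolding w_def by (rule nth_map[OF j'])
        ultimately show "?v ! j = map \<phi> w ! j" using f_inv_into_f[OF r] by simp
      qed
      have lw: "length w = k + m" using lx ly by (simp add: w_def)
      have eqw: "\<forall>(s,t)\<in>set eqs. eval_tm cF w s = eval_tm cF w t"
      proof (intro ballI, clarify)
        fix s t assume st: "(s, t) \<in> set eqs"
        then have "(trt s, trt t) \<in> set (extras (k + m) @ map trEq eqs)" by force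
        then have "eval_tm cD ?v (trt s) = eval_tm cD ?v (trt t)" using eq by auto
        then have "\<phi> (eval_tm cF w s) = \<phi> (eval_tm cF w t)"
          unfolding vw using wq[OF st] lw by (subst (asm) ev, auto)+
        then show "eval_tm cF w s = eval_tm cF w t" using inj by (simp add: inj_eq)
      qed
      have "take k w @ drop k w = w" by simp
      moreover have "xs' = map \<phi> (take k w)"
        using vw lx by (metis append_eq_conv_conj take_map)
      ultimately show "xs' \<in> map \<phi> ` dioph_set cF d"
        unfolding d dioph_set_def using lw eqw
        by (auto intro!: image_eqI[of _ _ "take k w"] exI[of _ "drop k w"])
    qed
  qed
qed


lemma main_logic:
  fixes \<phi> :: "'a::{plus,times} \<Rightarrow> 'b::{plus,times}"
  assumes add: "\<And>x y. \<phi> (x + y) = \<phi> x + \<phi> y" and mul: "\<And>x y. \<phi> (x * y) = \<phi> x * \<phi> y"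
    and cst: "\<And>j. j < 3 \<Longrightarrow> \<phi> (cF j) = eval_tm cD [] (trt (Cst j))"
    and inj: "inj \<phi>"
    and cen: "\<And>z. z * (cD 2 + cD 3) = (cD 2 + cD 3) * z \<longleftrightarrow> z \<in> range \<phi>"
  shows "dioph_map cF 3 cD 4 \<phi> \<and> effective_dioph_map cF 3 cD 4 \<phi>"
proof
  show "effective_dioph_map cF 3 cD 4 \<phi>" unfolding effective_dioph_map_def
  proof (intro exI[of _ gfun] conjI allI impI computable_gfun)
    fix d :: ddef assume w: "wf_ddef 3 d"
    show "\<exists>d'. gfun (enc_ddef d) = enc_ddef d' \<and> wf_ddef 4 d' \<and> fst d' = fst d \<and>
                 dioph_set cD d' = map \<phi> ` dioph_set cF d"
      using wf_trd[OF w] dioph_trd[OF add mul cst inj cen w] by (intro exI[of _ "trd d"]) (simp add: gfun_enc)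
  qed
  show "dioph_map cF 3 cD 4 \<phi>" unfolding dioph_map_def
  proof (intro allI impI)
    fix k S assume "is_dioph cF 3 k S"
    then obtain m eqs where S: "S \<subseteq> {xs. length xs = k}" and w: "wf_ddef 3 (k, m, eqs)"
      and Sd: "S = dioph_set cF (k, m, eqs)" unfolding is_dioph_def by auto
    have "map \<phi> ` S = dioph_set cD (trd (k, m, eqs))" using dioph_trd[OF add mul cst inj cen w] Sd by simp
    moreover have "wf_ddef 4 (trd (k, m, eqs))" using wf_trd[OF w] by simp
    moreover have "map \<phi> ` S \<subseteq> {xs. length xs = k}" using S by auto
    ultimately show "is_dioph cD 4 k (map \<phi> ` S)" unfolding is_dioph_def trd_def by auto
  qed
qed


lemma finite_field_pow_card:
  fixes c :: "'q::{finite,field}"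
  shows "c ^ card (UNIV :: 'q set) = c"
proof (cases "c = 0")
  case True then show ?thesis by (simp add: zero_power finite_UNIV_card_ge_0)
next
  case False
  let ?U = "UNIV - {0::'q}"
  have inj: "inj_on (\<lambda>x. c * x) ?U" using False by (auto intro: inj_onI)
  have img: "(\<lambda>x. c * x) ` ?U = ?U"
  proof
    show "(\<lambda>x. c * x) ` ?U \<subseteq> ?U" using False by auto
    show "?U \<subseteq> (\<lambda>x. c * x) ` ?U"
    proof
      fix y assume "y \<in> ?U"
      then have "y = c * (inverse c * y)" "inverse c * y \<in> ?U" using False by (auto simp: field_simps)
      then show "y \<in> (\<lambda>x. c * x) ` ?U" by blast
    qed
  qed
  have "prod (\<lambda>x. x) ?U = prod (\<lambda>x. x) ((\<lambda>x. c * x) ` ?U)" by (simp add: img)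
  also have "\<dots> = prod (\<lambda>x. c * x) ?U" by (rule prod.reindex[OF inj, unfolded comp_def])
  also have "\<dots> = c ^ card ?U * prod (\<lambda>x. x) ?U" by (simp add: prod.distrib)
  finally have eq: "prod (\<lambda>x. x) ?U = c ^ card ?U * prod (\<lambda>x. x) ?U" .
  have nz: "prod (\<lambda>x. x) ?U \<noteq> 0" by simp
  have "c ^ card ?U = 1"
  proof -
    have "1 * prod (\<lambda>x. x) ?U = c ^ card ?U * prod (\<lambda>x. x) ?U" using eq by simp
    then show ?thesis using nz by (simp only: mult_cancel_right) simp
  qed
  moreover have "card ?U = card (UNIV :: 'q set) - 1" by (simp add: card_Diff_singleton)
  moreover have "card (UNIV :: 'q set) > 0" by (simp add: finite_UNIV_card_ge_0)
  ultimately have "card (UNIV :: 'q set) = Suc (card ?U)" by simp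
  then show ?thesis using \<open>c ^ card ?U = 1\<close> by (simp only: power_Suc2) simp
qed

lemma card_ge2: "card (UNIV :: 'q::{finite,field} set) \<ge> 2"
proof -
  have "{0::'q, 1} \<subseteq> UNIV" by simp
  then have "card {0::'q, 1} \<le> card (UNIV :: 'q set)" by (rule card_mono[OF finite_UNIV])
  then show ?thesis by simp
qed


declare sum.lessThan_Suc[simp del] prod.lessThan_Suc[simp del]

locale carl =
  fixes \<iota> :: "'q::{finite,field} poly \<Rightarrow> 'k::field" and e :: "'k \<Rightarrow> 'd::division_ring" and t :: 'd
    and Q :: nat
  assumes Qdef: "Q = card (UNIV :: 'q set)" and i1: "\<iota> 1 = 1" and iadd: "\<And>a b. \<iota> (a + b) = \<iota> a + \<iota> b" and imul: "\<And>a b. \<iota> (a * b) = \<iota> a * \<iota> b"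
    and tw: "is_left_twisted_fraction_ring (card (UNIV :: 'q set)) e t"
begin


lemma e_inj: "inj e" and e1: "e 1 = 1" and eadd: "e (a + b) = e a + e b" and emul: "e (a * b) = e a * e b"
  and te: "t * e a = e (a ^ Q) * t"
  and free: "(\<Sum>i<n. e (c i) * t ^ i) = 0 \<Longrightarrow> i < n \<Longrightarrow> c i = 0"
  and frac: "\<exists>a b. a \<in> twisted_polys e t \<and> b \<in> twisted_polys e t \<and> b \<noteq> 0 \<and> x = inverse b * a"
  using tw unfolding is_left_twisted_fraction_ring_def Qdef[symmetric] by blast+

lemma e0[simp]: "e 0 = 0"
  using eadd[of 0 0] by simp

lemma eminus: "e (- a) = - e a"
proof -
  have "e a + e (- a) = 0" using eadd[of a "- a"] by simp
  from add.inverse_unique[OF this] show ?thesis by simp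
qed

lemma ediff: "e (a - b) = e a - e b"
  using eadd[of a "- b"] by (simp add: eminus)

lemma esum: "e (sum f A) = (\<Sum>x\<in>A. e (f x))"
  by (induction A rule: infinite_finite_induct) (simp_all add: eadd)

lemma e_eq0[simp]: "e a = 0 \<longleftrightarrow> a = 0"
  using e_inj by (metis e0 injD)

lemma e_eq_iff: "e a = e b \<longleftrightarrow> a = b"
  using e_inj by (meson injD)

lemma Q_pos: "Q > 0" by (simp add: Qdef finite_UNIV_card_ge_0)

lemma tpow_e: "t ^ i * e a = e (a ^ (Q ^ i)) * t ^ i"
proof (induction i arbitrary: a)
  case 0 then show ?case by simp
next
  case (Suc i)
  have "t ^ Suc i * e a = t ^ i * (t * e a)" by (simp only: power_Suc2 mult.assoc)
  also have "\<dots> = t ^ i * e (a ^ Q) * t" by (simp add: te mult.assoc)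
  also have "\<dots> = e ((a ^ Q) ^ (Q ^ i)) * t ^ i * t" by (simp add: Suc)
  also have "\<dots> = e (a ^ (Q ^ Suc i)) * t ^ Suc i"
    by (simp add: power_Suc2 mult.assoc power_mult[symmetric] mult.commute power_commutes)
  finally show ?case .
qed

definition twp :: "'k poly \<Rightarrow> 'd" where
  "twp p = (\<Sum>i<Suc (degree p). e (coeff p i) * t ^ i)"

lemma twp_sum: "degree p < N \<Longrightarrow> twp p = (\<Sum>i<N. e (coeff p i) * t ^ i)"
proof -
  assume N: "degree p < N"
  have "(\<Sum>i<N. e (coeff p i) * t ^ i) = (\<Sum>i<Suc (degree p). e (coeff p i) * t ^ i)"
  proof (rule sum.mono_neutral_right)
    show "\<forall>i\<in>{..<N} - {..<Suc (degree p)}. e (coeff p i) * t ^ i = 0"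
      by (auto simp: coeff_eq_0)
  qed (use N in auto)
  then show ?thesis by (simp add: twp_def)
qed

lemma twp_add: "twp (p + r) = twp p + twp r"
proof -
  let ?N = "Suc (max (degree p) (degree r))"
  have "degree (p + r) < ?N" using degree_add_le_max[of p r] by simp
  then show ?thesis
    by (simp add: twp_sum[of "p + r" ?N] twp_sum[of p ?N] twp_sum[of r ?N] eadd distrib_right sum.distrib)
qed

lemma twp_0[simp]: "twp 0 = 0" by (simp add: twp_def)

lemma twp_minus: "twp (- p) = - twp p"
proof -
  have "twp p + twp (- p) = 0" using twp_add[of p "- p"] by simp
  from add.inverse_unique[OF this] show ?thesis by simp
qed

lemma twp_diff: "twp (p - r) = twp p - twp r"
  using twp_add[of p "- r"] by (simp add: twp_minus)

lemma twp_sumset: "twp (sum f A) = (\<Sum>x\<in>A. twp (f x))"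
  by (induction A rule: infinite_finite_induct) (simp_all add: twp_add)

lemma twp_eq0: "twp p = 0 \<longleftrightarrow> p = 0"
proof
  assume "twp p = 0"
  then have "(\<Sum>i<Suc (degree p). e (coeff p i) * t ^ i) = 0" by (simp add: twp_def)
  then have "\<forall>i<Suc (degree p). coeff p i = 0" using free by blast
  then show "p = 0" by (metis leading_coeff_0_iff lessI)
qed simp

lemma twp_inj: "twp p = twp r \<longleftrightarrow> p = r"
  using twp_eq0[of "p - r"] by (simp add: twp_diff)

lemma twp_const: "twp [:c:] = e c" by (simp add: twp_def)

lemma twp_pCons0: "twp (pCons 0 p) = twp p * t"
proof -
  let ?N = "Suc (degree p)"
  have "degree (pCons 0 p) < Suc ?N" by (simp add: degree_pCons_le le_imp_less_Suc)
  then have "twp (pCons 0 p) = (\<Sum>i<Suc ?N. e (coeff (pCons 0 p) i) * t ^ i)" by (rule twp_sum)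
  also have "\<dots> = (\<Sum>i<?N. e (coeff p i) * t ^ Suc i)" by (simp only: sum.lessThan_Suc_shift) simp
  also have "\<dots> = (\<Sum>i<?N. e (coeff p i) * t ^ i) * t" by (simp add: sum_distrib_right power_Suc2 mult.assoc power_commutes)
  also have "\<dots> = twp p * t" by (simp add: twp_def del: sum.lessThan_Suc)
  finally show ?thesis .
qed

lemma twp_smult: "twp (smult c p) = e c * twp p"
proof -
  have "twp (smult c p) = (\<Sum>i<Suc (degree p). e (coeff (smult c p) i) * t ^ i)"
    by (rule twp_sum) (simp add: le_imp_less_Suc)
  also have "\<dots> = e c * twp p" by (simp add: twp_def sum_distrib_left emul mult.assoc del: sum.lessThan_Suc)
  finally show ?thesis .
qed

lemma twp_monom1_mult: "twp (monom 1 i * s) = twp s * t ^ i"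
proof (induction i)
  case 0 then show ?case by (simp add: monom_0 one_pCons[symmetric])
next
  case (Suc i)
  have "monom 1 (Suc i) * s = pCons 0 (monom 1 i * s)" by (simp add: monom_Suc)
  then show ?case using Suc by (simp add: twp_pCons0 power_Suc2 mult.assoc power_commutes)
qed

lemma twp_monom_mult: "twp (monom c i * s) = e c * twp s * t ^ i"
proof -
  have "monom c i = smult c (monom 1 i)" by (simp add: smult_monom)
  then show ?thesis by (simp add: twp_smult twp_monom1_mult mult.assoc)
qed

lemma twp_1: "twp 1 = 1" by (simp add: twp_def e1 sum.lessThan_Suc)

lemma twp_monom: "twp (monom c i) = e c * t ^ i"
  using twp_monom_mult[of c i 1] by (simp add: twp_1)

definition fr :: "nat \<Rightarrow> 'k poly \<Rightarrow> 'k poly" where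
  "fr i r = map_poly (\<lambda>c. c ^ (Q ^ i)) r"

lemma coeff_fr: "coeff (fr i r) j = coeff r j ^ (Q ^ i)"
  unfolding fr_def by (rule coeff_map_poly) (simp add: Q_pos)

lemma degree_fr: "degree (fr i r) = degree r"
  unfolding fr_def by (rule degree_map_poly) (simp add: Q_pos)

lemma tpow_twp: "t ^ i * twp r = twp (fr i r) * t ^ i"
proof -
  let ?N = "Suc (degree r)"
  have "t ^ i * twp r = (\<Sum>j<?N. t ^ i * e (coeff r j) * t ^ j)"
    by (simp add: twp_def sum_distrib_left mult.assoc)
  also have "\<dots> = (\<Sum>j<?N. e (coeff (fr i r) j) * t ^ j * t ^ i)"
    by (rule sum.cong) (simp_all add: tpow_e coeff_fr mult.assoc power_add[symmetric] add.commute)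
  also have "\<dots> = twp (fr i r) * t ^ i"
    by (simp add: twp_sum[of "fr i r" ?N] degree_fr sum_distrib_right)
  finally show ?thesis .
qed

definition tmul :: "'k poly \<Rightarrow> 'k poly \<Rightarrow> 'k poly" where
  "tmul p r = (\<Sum>i<Suc (degree p). monom (coeff p i) i * fr i r)"

lemma twp_tmul: "twp (tmul p r) = twp p * twp r"
proof -
  have "twp (tmul p r) = (\<Sum>i<Suc (degree p). e (coeff p i) * twp (fr i r) * t ^ i)"
    by (simp add: tmul_def twp_sumset twp_monom_mult)
  also have "\<dots> = (\<Sum>i<Suc (degree p). e (coeff p i) * t ^ i * twp r)"
    by (rule sum.cong) (simp_all add: tpow_twp mult.assoc)
  also have "\<dots> = twp p * twp r" by (simp add: twp_def sum_distrib_right)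
  finally show ?thesis .
qed

lemma coeff_tmul: "coeff (tmul p r) n = (\<Sum>i<Suc (degree p). if i \<le> n then coeff p i * coeff r (n - i) ^ (Q ^ i) else 0)"
  unfolding tmul_def coeff_sum by (rule sum.cong) (simp_all add: coeff_monom_mult coeff_fr)

lemma tmul_deg_lead:
  assumes "p \<noteq> 0" "r \<noteq> 0"
  shows "degree (tmul p r) = degree p + degree r \<and> lead_coeff (tmul p r) = lead_coeff p * lead_coeff r ^ (Q ^ degree p)"
proof -
  let ?dp = "degree p" and ?dr = "degree r"
  have z: "coeff (tmul p r) n = 0" if "n > ?dp + ?dr" for n
  proof -
    have "(if i \<le> n then coeff p i * coeff r (n - i) ^ (Q ^ i) else 0) = 0" if "i < Suc ?dp" for i
    proof -
      have "n - i > ?dr" using that \<open>n > ?dp + ?dr\<close> by simp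
      then have "coeff r (n - i) = 0" by (simp add: coeff_eq_0)
      then show ?thesis using Q_pos by simp
    qed
    then show ?thesis by (simp add: coeff_tmul)
  qed
  have l: "coeff (tmul p r) (?dp + ?dr) = lead_coeff p * lead_coeff r ^ (Q ^ ?dp)"
  proof -
    have "(\<Sum>i<Suc ?dp. if i \<le> ?dp + ?dr then coeff p i * coeff r (?dp + ?dr - i) ^ (Q ^ i) else 0)
        = (\<Sum>i\<in>{?dp}. if i \<le> ?dp + ?dr then coeff p i * coeff r (?dp + ?dr - i) ^ (Q ^ i) else 0)"
    proof (rule sum.mono_neutral_right)
      show "\<forall>i\<in>{..<Suc ?dp} - {?dp}. (if i \<le> ?dp + ?dr then coeff p i * coeff r (?dp + ?dr - i) ^ (Q ^ i) else 0) = 0"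
      proof
        fix i assume "i \<in> {..<Suc ?dp} - {?dp}"
        then have "i < ?dp" by auto
        then have "?dp + ?dr - i > ?dr" by simp
        then have "coeff r (?dp + ?dr - i) = 0" by (simp add: coeff_eq_0)
        then show "(if i \<le> ?dp + ?dr then coeff p i * coeff r (?dp + ?dr - i) ^ (Q ^ i) else 0) = 0"
          using Q_pos by simp
      qed
    qed auto
    then show ?thesis by (simp add: coeff_tmul)
  qed
  have nz: "lead_coeff p * lead_coeff r ^ (Q ^ ?dp) \<noteq> 0" using assms by simp
  have "degree (tmul p r) \<le> ?dp + ?dr" by (rule degree_le) (use z in auto)
  moreover have "?dp + ?dr \<le> degree (tmul p r)" by (rule le_degree) (use l nz in simp)
  ultimately have d: "degree (tmul p r) = ?dp + ?dr" by simp
  then show ?thesis using l by simp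
qed

end


context carl begin

definition P :: "'d set" where "P = range twp"
definition rep :: "'d \<Rightarrow> 'k poly" where "rep x = inv twp x"
definition dg :: "'d \<Rightarrow> nat" where "dg x = degree (rep x)"
definition ld :: "'d \<Rightarrow> 'k" where "ld x = lead_coeff (rep x)"

lemma inj_twp: "inj twp" by (rule injI) (simp add: twp_inj)

lemma rep_twp[simp]: "rep (twp p) = p"
  unfolding rep_def by (rule inv_f_f[OF inj_twp])

lemma twp_rep: "x \<in> P \<Longrightarrow> twp (rep x) = x"
  unfolding P_def rep_def by (rule f_inv_into_f)

lemma dg_twp[simp]: "dg (twp p) = degree p" by (simp add: dg_def)
lemma ld_twp[simp]: "ld (twp p) = lead_coeff p" by (simp add: ld_def)

lemma P_twp[simp]: "twp p \<in> P" by (simp add: P_def)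

lemma P_E: "x \<in> P \<Longrightarrow> (\<And>p. x = twp p \<Longrightarrow> thesis) \<Longrightarrow> thesis"
  unfolding P_def by blast

lemma P_mult: "x \<in> P \<Longrightarrow> y \<in> P \<Longrightarrow> x * y \<in> P"
  by (metis P_E P_twp twp_tmul)

lemma P_add: "x \<in> P \<Longrightarrow> y \<in> P \<Longrightarrow> x + y \<in> P"
  by (metis P_E P_twp twp_add)

lemma P_diff: "x \<in> P \<Longrightarrow> y \<in> P \<Longrightarrow> x - y \<in> P"
  by (metis P_E P_twp twp_diff)

lemma P_0[simp]: "0 \<in> P" using P_twp[of 0] by simp
lemma P_1[simp]: "1 \<in> P" using P_twp[of 1] by (simp add: twp_1)
lemma P_e[simp]: "e c \<in> P" using P_twp[of "[:c:]"] by (simp add: twp_const)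
lemma P_monom[simp]: "e c * t ^ k \<in> P" using P_twp[of "monom c k"] by (simp add: twp_monom)

lemma dg_monom: "c \<noteq> 0 \<Longrightarrow> dg (e c * t ^ k) = k \<and> ld (e c * t ^ k) = c"
  using dg_twp[of "monom c k"] ld_twp[of "monom c k"] by (simp add: twp_monom degree_monom_eq)

lemma dg_e: "dg (e c) = 0 \<and> ld (e c) = c"
  using dg_twp[of "[:c:]"] ld_twp[of "[:c:]"] by (simp add: twp_const)

lemma ld_nz: "x \<in> P \<Longrightarrow> x \<noteq> 0 \<Longrightarrow> ld x \<noteq> 0"
  by (metis P_E ld_twp leading_coeff_0_iff twp_0)

lemma dg_mult: "x \<in> P \<Longrightarrow> y \<in> P \<Longrightarrow> x \<noteq> 0 \<Longrightarrow> y \<noteq> 0 \<Longrightarrow>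
   dg (x * y) = dg x + dg y \<and> ld (x * y) = ld x * ld y ^ (Q ^ dg x)"
proof -
  assume "x \<in> P" "y \<in> P" "x \<noteq> 0" "y \<noteq> 0"
  then obtain p r where x: "x = twp p" and y: "y = twp r" and "p \<noteq> 0" "r \<noteq> 0"
    by (metis P_E twp_0)
  have xy: "x * y = twp (tmul p r)" by (simp add: x y twp_tmul)
  have A: "degree (tmul p r) = degree p + degree r" and B: "lead_coeff (tmul p r) = lead_coeff p * lead_coeff r ^ (Q ^ degree p)"
    using tmul_deg_lead[OF \<open>p \<noteq> 0\<close> \<open>r \<noteq> 0\<close>] by blast+
  have "dg (x * y) = degree (tmul p r)" by (simp only: xy dg_twp)
  also have "\<dots> = dg x + dg y" by (simp only: A x y dg_twp)
  finally have 1: "dg (x * y) = dg x + dg y" .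
  have "ld (x * y) = lead_coeff (tmul p r)" by (simp only: xy ld_twp)
  also have "\<dots> = lead_coeff p * lead_coeff r ^ (Q ^ degree p)" by (rule B)
  also have "\<dots> = ld x * ld y ^ (Q ^ dg x)" by (simp only: x y dg_twp ld_twp)
  finally show ?thesis using 1 by blast
qed

lemma ld_0[simp]: "ld 0 = 0" and dg_0[simp]: "dg 0 = 0"
  using ld_twp[of 0] dg_twp[of 0] by simp_all

lemma dg_diff_less: "x \<in> P \<Longrightarrow> y \<in> P \<Longrightarrow> dg x = dg y \<Longrightarrow> ld x = ld y \<Longrightarrow> x \<noteq> y \<Longrightarrow> dg (x - y) < dg x"
proof -
  assume "x \<in> P" "y \<in> P" and d: "dg x = dg y" and l: "ld x = ld y" and ne: "x \<noteq> y"
  then obtain p r where x: "x = twp p" and y: "y = twp r" by (metis P_E)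
  have dp: "degree p = degree r" and lp: "lead_coeff p = lead_coeff r" using d l x y by simp_all
  have ne': "p - r \<noteq> 0" using ne x y by auto
  have le: "degree (p - r) \<le> degree p" using degree_diff_le_max[of p r] dp by simp
  have c0: "coeff (p - r) (degree p) = 0" using lp dp by simp
  have "degree (p - r) \<noteq> degree p" using c0 ne' by (metis leading_coeff_0_iff)
  then have "degree (p - r) < degree p" using le by simp
  then show ?thesis using x y by (simp add: twp_diff[symmetric])
qed

lemma dg_add_low: "x \<in> P \<Longrightarrow> y \<in> P \<Longrightarrow> dg y < dg x \<Longrightarrow> dg (x + y) = dg x \<and> ld (x + y) = ld x"
proof -
  assume "x \<in> P" "y \<in> P" and d: "dg y < dg x"
  then obtain p r where x: "x = twp p" and y: "y = twp r" by (metis P_E)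
  have dr: "degree r < degree p" using d x y by simp
  have d1: "degree (p + r) = degree p" by (rule degree_add_eq_left[OF dr])
  have l1: "lead_coeff (r + p) = lead_coeff p" by (rule lead_coeff_add_le[OF dr])
  have xy: "x + y = twp (p + r)" by (simp add: x y twp_add)
  have "dg (x + y) = degree (p + r)" "ld (x + y) = lead_coeff (p + r)" by (simp_all only: xy dg_twp ld_twp)
  moreover have "dg x = degree p" "ld x = lead_coeff p" by (simp_all only: x dg_twp ld_twp)
  moreover have "lead_coeff (p + r) = lead_coeff p" using l1 by (simp only: add.commute)
  ultimately show ?thesis using d1 by (simp only:)
qed

lemma rdiv:
  assumes g: "g \<in> P" "g \<noteq> 0"
  shows "f \<in> P \<Longrightarrow> \<exists>H r. H \<in> P \<and> r \<in> P \<and> f = H * g + r \<and> (r = 0 \<or> dg r < dg g)"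
proof (induction "dg f" arbitrary: f rule: less_induct)
  case less
  show ?case
  proof (cases "f = 0 \<or> dg f < dg g")
    case True
    then show ?thesis using less.prems by (intro exI[of _ 0] exI[of _ f]) auto
  next
    case False
    then have f0: "f \<noteq> 0" and fg: "dg g \<le> dg f" by auto
    define k where "k = dg f - dg g"
    define c where "c = ld f / ld g ^ (Q ^ k)"
    have lg: "ld g \<noteq> 0" using ld_nz g by simp
    have lf: "ld f \<noteq> 0" using ld_nz less.prems f0 by simp
    have c0: "c \<noteq> 0" using lg lf by (simp add: c_def)
    let ?H0 = "e c * t ^ k"
    have H0': "dg ?H0 = k" "ld ?H0 = c" using dg_monom[OF c0, of k] by auto
    have H0: "?H0 \<in> P" "?H0 \<noteq> 0" "dg ?H0 = k" "ld ?H0 = c"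
      using H0' c0 by (auto simp del: mult_eq_0_iff)
    have m: "dg (?H0 * g) = dg f" "ld (?H0 * g) = ld f"
      using dg_mult[OF H0(1) g(1) H0(2) g(2)] H0 fg lg by (auto simp: k_def c_def)
    have Hg: "?H0 * g \<in> P" by (rule P_mult[OF H0(1) g(1)])
    show ?thesis
    proof (cases "f = ?H0 * g")
      case True
      then show ?thesis using H0(1) by (intro exI[of _ ?H0] exI[of _ 0]) auto
    next
      case False
      have "dg (f - ?H0 * g) < dg f" using dg_diff_less[OF less.prems Hg] m False by simp
      moreover have "f - ?H0 * g \<in> P" by (rule P_diff[OF less.prems Hg])
      ultimately obtain H r where Hr: "H \<in> P" "r \<in> P" "f - ?H0 * g = H * g + r" "r = 0 \<or> dg r < dg g"
        using less.hyps by blast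
      have "f = (?H0 + H) * g + r" using Hr(3) by (simp add: distrib_right algebra_simps)
      then show ?thesis using Hr H0(1) by (intro exI[of _ "?H0 + H"] exI[of _ r]) (auto intro: P_add)
    qed
  qed
qed

end


context carl begin

definition \<kappa> :: "'q \<Rightarrow> 'd" where "\<kappa> c = e (\<iota> [:c:])"
definition \<Phi> :: 'd where "\<Phi> = e (\<iota> [:0, 1:]) + t"
abbreviation "cz \<equiv> carlitz \<iota> e t"

lemma i0[simp]: "\<iota> 0 = 0" using iadd[of 0 0] by (metis add.right_neutral add_left_cancel)

lemma ipow: "\<iota> (p ^ n) = \<iota> p ^ n"
  by (induction n) (simp_all add: i1 imul)

lemma \<kappa>_add: "\<kappa> (a + b) = \<kappa> a + \<kappa> b"
proof -
  have "[:a + b:] = [:a:] + [:b:]" by simp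
  then show ?thesis by (simp only: \<kappa>_def iadd eadd)
qed

lemma \<kappa>_mul: "\<kappa> (a * b) = \<kappa> a * \<kappa> b"
proof -
  have "[:a * b:] = [:a:] * [:b:]" by simp
  then show ?thesis by (simp only: \<kappa>_def imul emul)
qed

lemma \<kappa>_0[simp]: "\<kappa> 0 = 0" by (simp add: \<kappa>_def)
lemma \<kappa>_1[simp]: "\<kappa> 1 = 1" by (simp add: \<kappa>_def i1 e1 one_pCons[symmetric])

lemma \<kappa>_minus: "\<kappa> (- a) = - \<kappa> a"
proof -
  have "\<kappa> a + \<kappa> (- a) = 0" using \<kappa>_add[of a "- a"] by simp
  from add.inverse_unique[OF this] show ?thesis by simp
qed

lemma iconst_inj: "\<iota> [:a:] = \<iota> [:b:] \<Longrightarrow> a = b"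
proof (rule ccontr)
  assume eq: "\<iota> [:a:] = \<iota> [:b:]" and ne: "a \<noteq> b"
  have "\<iota> [:a - b:] = 0" using eq iadd[of "[:a - b:]" "[:b:]"] by simp
  then have "\<iota> ([:a - b:] * [:inverse (a - b):]) = 0" by (simp only: imul mult_zero_left)
  moreover have "[:a - b:] * [:inverse (a - b):] = 1" using ne by (simp add: one_pCons)
  ultimately show False using i1 by simp
qed

lemma \<kappa>_eq0: "\<kappa> a = 0 \<longleftrightarrow> a = 0"
  using iconst_inj[of a 0] by (auto simp: \<kappa>_def)

lemma iconst_frob: "\<iota> [:c:] ^ Q = \<iota> [:c:]"
proof -
  have "[:c:] ^ Q = [:c ^ Q:]" by (induction Q) (simp_all add: one_pCons)
  then show ?thesis using finite_field_pow_card[of c] by (simp add: ipow[symmetric] Qdef)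
qed

lemma \<kappa>_t: "t * \<kappa> c = \<kappa> c * t"
  by (simp add: \<kappa>_def te iconst_frob)

lemma \<kappa>_e: "\<kappa> c * e a = e a * \<kappa> c"
  by (simp add: \<kappa>_def emul[symmetric] mult.commute)

lemma \<kappa>_\<Phi>: "\<kappa> c * \<Phi> = \<Phi> * \<kappa> c"
  by (simp add: \<Phi>_def distrib_left distrib_right \<kappa>_e \<kappa>_t)

lemma \<kappa>_\<Phi>pow: "\<kappa> c * \<Phi> ^ n = \<Phi> ^ n * \<kappa> c"
  by (induction n) (simp_all add: mult.assoc[symmetric] \<kappa>_\<Phi>, simp add: mult.assoc \<kappa>_\<Phi> power_commutes)

lemma cz_sum: "degree a < N \<Longrightarrow> cz a = (\<Sum>i<N. \<kappa> (coeff a i) * \<Phi> ^ i)"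
proof -
  assume N: "degree a < N"
  have "cz a = (\<Sum>i<Suc (degree a). \<kappa> (coeff a i) * \<Phi> ^ i)"
    by (simp add: carlitz_def \<kappa>_def \<Phi>_def lessThan_Suc_atMost)
  also have "\<dots> = (\<Sum>i<N. \<kappa> (coeff a i) * \<Phi> ^ i)"
  proof (rule sum.mono_neutral_left)
    show "\<forall>i\<in>{..<N} - {..<Suc (degree a)}. \<kappa> (coeff a i) * \<Phi> ^ i = 0"
      by (auto simp: coeff_eq_0)
  qed (use N in auto)
  finally show ?thesis .
qed

lemma cz_add: "cz (a + b) = cz a + cz b"
proof -
  let ?N = "Suc (max (degree a) (degree b))"
  have "degree (a + b) < ?N" using degree_add_le_max[of a b] by simp
  then show ?thesis
    by (simp add: cz_sum[of "a + b" ?N] cz_sum[of a ?N] cz_sum[of b ?N] \<kappa>_add distrib_right sum.distrib)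
qed

lemma cz_0[simp]: "cz 0 = 0" by (simp add: carlitz_def)

lemma cz_minus: "cz (- a) = - cz a"
proof -
  have "cz a + cz (- a) = 0" using cz_add[of a "- a"] by simp
  from add.inverse_unique[OF this] show ?thesis by simp
qed

lemma cz_diff: "cz (a - b) = cz a - cz b"
  using cz_add[of a "- b"] by (simp add: cz_minus)

lemma cz_pCons: "cz (pCons c a) = \<kappa> c + cz a * \<Phi>"
proof -
  let ?N = "Suc (degree a)"
  have "degree (pCons c a) < Suc ?N" by (simp add: degree_pCons_le le_imp_less_Suc)
  then have "cz (pCons c a) = (\<Sum>i<Suc ?N. \<kappa> (coeff (pCons c a) i) * \<Phi> ^ i)" by (rule cz_sum)
  also have "\<dots> = \<kappa> c + (\<Sum>i<?N. \<kappa> (coeff a i) * \<Phi> ^ Suc i)" by (simp only: sum.lessThan_Suc_shift) simp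
  also have "\<dots> = \<kappa> c + (\<Sum>i<?N. \<kappa> (coeff a i) * \<Phi> ^ i) * \<Phi>"
    by (simp add: sum_distrib_right power_Suc2 mult.assoc power_commutes)
  also have "\<dots> = \<kappa> c + cz a * \<Phi>" by (simp add: cz_sum[of a ?N])
  finally show ?thesis .
qed

lemma cz_const: "cz [:c:] = \<kappa> c"
  using cz_pCons[of c 0] by simp

lemma cz_1: "cz 1 = 1" using cz_const[of 1] by (simp add: one_pCons)

lemma cz_X: "cz [:0, 1:] = \<Phi>"
  using cz_pCons[of 0 "[:1:]"] by (simp add: cz_const)

lemma cz_\<Phi>: "\<Phi> * cz a = cz a * \<Phi>"
proof (induction a)
  case 0 then show ?case by simp
next
  case (pCons c a)
  then show ?case by (simp add: cz_pCons distrib_left distrib_right \<kappa>_\<Phi> mult.assoc[symmetric])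
qed

lemma cz_\<kappa>: "\<kappa> c * cz a = cz a * \<kappa> c"
proof (induction a)
  case 0 then show ?case by simp
next
  case (pCons d a)
  have "\<kappa> c * (cz a * \<Phi>) = cz a * \<kappa> c * \<Phi>" using pCons(2) by (simp add: mult.assoc[symmetric])
  also have "\<dots> = cz a * \<Phi> * \<kappa> c" by (simp add: mult.assoc \<kappa>_\<Phi>)
  finally show ?case by (simp add: cz_pCons distrib_left distrib_right \<kappa>_mul[symmetric] mult.commute)
qed

lemma cz_smult: "cz (smult c a) = \<kappa> c * cz a"
proof (induction a)
  case 0 then show ?case by simp
next
  case (pCons d a)
  then show ?case by (simp add: cz_pCons distrib_left \<kappa>_mul mult.assoc)
qed

lemma cz_mult: "cz (a * b) = cz a * cz b"
proof (induction a)
  case 0 then show ?case by simp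
next
  case (pCons c a)
  have "cz (pCons c a * b) = cz (smult c b + pCons 0 (a * b))" by simp
  also have "\<dots> = \<kappa> c * cz b + cz (a * b) * \<Phi>" by (simp add: cz_add cz_smult cz_pCons)
  also have "\<dots> = \<kappa> c * cz b + cz a * (cz b * \<Phi>)" by (simp add: pCons mult.assoc)
  also have "\<dots> = (\<kappa> c + cz a * \<Phi>) * cz b" by (simp only: cz_\<Phi>[of b, symmetric] distrib_right mult.assoc)
  finally show ?case by (simp add: cz_pCons)
qed

lemma cz_comm: "cz a * cz b = cz b * cz a"
  by (simp add: cz_mult[symmetric] mult.commute)

end


lemma inv_comm:
  fixes a b :: "'a::division_ring"
  assumes "a * b = b * a" shows "inverse a * b = b * inverse a"
proof (cases "a = 0")
  case True then show ?thesis by simp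
next
  case False
  have "inverse a * b = inverse a * (b * a) * inverse a" using False by (simp add: mult.assoc)
  also have "\<dots> = inverse a * (a * b) * inverse a" using assms by simp
  also have "\<dots> = b * inverse a" using False by (simp add: mult.assoc[symmetric])
  finally show ?thesis .
qed

lemma cancel_left_dr:
  fixes x y z :: "'a::division_ring"
  shows "x \<noteq> 0 \<Longrightarrow> x * y = x * z \<Longrightarrow> y = z"
  by simp

lemma frac_mul_left:
  fixes a b d :: "'a::division_ring"
  assumes "b \<noteq> 0" "b * d = d * b"
  shows "b * d * (inverse b * a) = d * a"
proof -
  have "b * d * (inverse b * a) = d * b * inverse b * a" using assms(2) by (simp add: mult.assoc)
  also have "\<dots> = d * a" using assms(1) by (simp add: mult.assoc)
  finally show ?thesis .
qed

lemma frac_mul_left2: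
  fixes a b d :: "'a::division_ring"
  assumes "d \<noteq> 0"
  shows "b * d * (inverse d * c) = b * c"
proof -
  have "b * d * (inverse d * c) = b * (d * inverse d) * c" by (simp only: mult.assoc)
  also have "\<dots> = b * c" using assms by simp
  finally show ?thesis .
qed

lemma frac_eq_iff:
  fixes a b c d :: "'a::division_ring"
  assumes "b \<noteq> 0" "d \<noteq> 0" "b * d = d * b" "a * d = d * a" "c * b = b * c"
  shows "inverse b * a = inverse d * c \<longleftrightarrow> a * d = c * b"
proof -
  have bd: "b * d \<noteq> 0" using assms by simp
  have "inverse b * a = inverse d * c \<longleftrightarrow> b * d * (inverse b * a) = b * d * (inverse d * c)"
    using bd by simp
  also have "\<dots> \<longleftrightarrow> d * a = b * c" by (simp only: frac_mul_left[OF assms(1,3)] frac_mul_left2[OF assms(2)])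
  also have "\<dots> \<longleftrightarrow> a * d = c * b" using assms(4,5) by simp
  finally show ?thesis .
qed

lemma frac_add:
  fixes a b c d :: "'a::division_ring"
  assumes "b \<noteq> 0" "d \<noteq> 0" "b * d = d * b" "a * d = d * a" "c * b = b * c"
  shows "inverse (b * d) * (a * d + c * b) = inverse b * a + inverse d * c"
proof -
  have bd: "b * d \<noteq> 0" using assms by simp
  have "b * d * (inverse b * a + inverse d * c) = d * a + b * c"
    by (simp only: distrib_left frac_mul_left[OF assms(1,3)] frac_mul_left2[OF assms(2)])
  also have "\<dots> = a * d + c * b" using assms(4,5) by simp
  also have "\<dots> = b * d * (inverse (b * d) * (a * d + c * b))" using bd by (simp add: mult.assoc[symmetric])
  finally show ?thesis using bd by simp
qed

lemma frac_mult:
  fixes a b c d :: "'a::division_ring"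
  assumes "b \<noteq> 0" "d \<noteq> 0" "b * d = d * b" "a * d = d * a"
  shows "inverse (b * d) * (a * c) = inverse b * a * (inverse d * c)"
proof -
  have bd: "b * d \<noteq> 0" using assms by simp
  have "b * d * (inverse b * a * (inverse d * c)) = d * a * (inverse d * c)"
    by (simp only: mult.assoc[symmetric] frac_mul_left[OF assms(1,3), of a, unfolded mult.assoc[symmetric]])
  also have "\<dots> = a * d * (inverse d * c)" using assms(4) by simp
  also have "\<dots> = a * c" by (rule frac_mul_left2[OF assms(2)])
  also have "\<dots> = b * d * (inverse (b * d) * (a * c))" using bd by (simp add: mult.assoc[symmetric])
  finally show ?thesis using bd by simp
qed

context carl begin

lemma \<Phi>_twp: "\<Phi> = twp [:\<iota> [:0, 1:], 1:]"
proof -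
  have "[:\<iota> [:0, 1:], 1:] = [:\<iota> [:0, 1:]:] + pCons 0 [:1:]" by simp
  then show ?thesis by (simp only: twp_add twp_const twp_pCons0 \<Phi>_def) (simp add: twp_const e1)
qed

lemma \<Phi>_P: "\<Phi> \<in> P" and dg_\<Phi>: "dg \<Phi> = 1" and ld_\<Phi>: "ld \<Phi> = 1" and \<Phi>_nz: "\<Phi> \<noteq> 0"
  by (simp_all add: \<Phi>_twp twp_eq0)

lemma \<kappa>_P: "\<kappa> c \<in> P" and dg_\<kappa>: "dg (\<kappa> c) = 0" and ld_\<kappa>: "ld (\<kappa> c) = \<iota> [:c:]"
  by (simp_all add: \<kappa>_def dg_e)

lemma iconst_nz: "c \<noteq> 0 \<Longrightarrow> \<iota> [:c:] \<noteq> 0"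
  using iconst_inj[of c 0] by auto

lemma cz_deg: "cz a \<in> P \<and> (a \<noteq> 0 \<longrightarrow> dg (cz a) = degree a \<and> ld (cz a) = \<iota> [:lead_coeff a:])"
proof (induction a)
  case 0 then show ?case by simp
next
  case (pCons c a)
  show ?case
  proof (cases "a = 0")
    case True
    then show ?thesis by (simp add: cz_const \<kappa>_P dg_\<kappa> ld_\<kappa>)
  next
    case False
    have P: "cz a \<in> P" and d: "dg (cz a) = degree a" and l: "ld (cz a) = \<iota> [:lead_coeff a:]"
      using pCons.IH False by auto
    have nz: "cz a \<noteq> 0" using l False iconst_nz[of "lead_coeff a"] by (metis ld_0 leading_coeff_0_iff)
    have m: "dg (cz a * \<Phi>) = degree a + 1 \<and> ld (cz a * \<Phi>) = \<iota> [:lead_coeff a:]"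
      using dg_mult[OF P \<Phi>_P nz \<Phi>_nz] d l by (simp add: dg_\<Phi> ld_\<Phi>)
    have mP: "cz a * \<Phi> \<in> P" by (rule P_mult[OF P \<Phi>_P])
    have "dg (cz a * \<Phi> + \<kappa> c) = dg (cz a * \<Phi>) \<and> ld (cz a * \<Phi> + \<kappa> c) = ld (cz a * \<Phi>)"
      by (rule dg_add_low[OF mP \<kappa>_P]) (simp add: m dg_\<kappa>)
    then show ?thesis using m False mP
      by (simp add: cz_pCons add.commute P_add \<kappa>_P)
  qed
qed

lemma cz_P: "cz a \<in> P" using cz_deg by blast

lemma cz_nz: "a \<noteq> 0 \<Longrightarrow> cz a \<noteq> 0"
  using cz_deg[of a] iconst_nz[of "lead_coeff a"] by (metis ld_0 leading_coeff_0_iff)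

lemma cz_inj: "cz a = cz b \<Longrightarrow> a = b"
  using cz_nz[of "a - b"] by (auto simp: cz_diff)

abbreviation "cF \<equiv> carlitz_F \<iota> e t"

lemma cF_Fract: "b \<noteq> 0 \<Longrightarrow> cF (Fract a b) = inverse (cz b) * cz a"
proof -
  assume b: "b \<noteq> 0"
  let ?S = "SOME (a', b'). b' \<noteq> 0 \<and> Fract a b = Fract a' b'"
  obtain a' b' where ab: "?S = (a', b')" by (cases ?S)
  have "(\<lambda>(a', b'). b' \<noteq> 0 \<and> Fract a b = Fract a' b') ?S"
    by (rule someI_ex) (use b in auto)
  then have b': "b' \<noteq> 0" and eq: "Fract a b = Fract a' b'" by (simp_all add: ab)
  have e2: "a * b' = a' * b" using eq b b' by (simp add: eq_fract)
  have "cF (Fract a b) = inverse (cz b') * cz a'" unfolding carlitz_F_def ab by simp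
  also have "\<dots> = inverse (cz b) * cz a"
    using frac_eq_iff[of "cz b'" "cz b" "cz a'" "cz a"] cz_nz b b' cz_comm e2
    by (simp add: cz_mult[symmetric] mult.commute)
  finally show ?thesis .
qed

lemma cF_cz: "cF (Fract a 1) = cz a" by (simp add: cF_Fract cz_1)

lemma cF_0: "cF 0 = 0" by (simp add: Zero_fract_def cF_Fract)
lemma cF_1: "cF 1 = 1" by (simp add: One_fract_def cF_Fract cz_1)

lemma cF_add: "cF (x + y) = cF x + cF y"
proof -
  obtain a b where x: "x = Fract a b" "b \<noteq> 0" by (cases x)
  obtain c d where y: "y = Fract c d" "d \<noteq> 0" by (cases y)
  have bd: "b * d \<noteq> 0" using x y by simp
  have "x + y = Fract (a * d + c * b) (b * d)" unfolding x(1) y(1) by (rule add_fract[OF x(2) y(2)])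
  then have "cF (x + y) = inverse (cz (b * d)) * cz (a * d + c * b)" by (simp only: cF_Fract[OF bd])
  also have "\<dots> = inverse (cz b * cz d) * (cz a * cz d + cz c * cz b)" by (simp only: cz_mult cz_add)
  also have "\<dots> = inverse (cz b) * cz a + inverse (cz d) * cz c"
    by (rule frac_add) (simp_all add: cz_nz x y cz_comm)
  finally show ?thesis by (simp only: x(1) y(1) cF_Fract[OF x(2)] cF_Fract[OF y(2)])
qed

lemma cF_mult: "cF (x * y) = cF x * cF y"
proof -
  obtain a b where x: "x = Fract a b" "b \<noteq> 0" by (cases x)
  obtain c d where y: "y = Fract c d" "d \<noteq> 0" by (cases y)
  have bd: "b * d \<noteq> 0" using x y by simp
  have "x * y = Fract (a * c) (b * d)" using x y by (simp only: mult_fract)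
  then have "cF (x * y) = inverse (cz (b * d)) * cz (a * c)" by (simp only: cF_Fract[OF bd])
  also have "\<dots> = inverse (cz b * cz d) * (cz a * cz c)" by (simp only: cz_mult)
  also have "\<dots> = inverse (cz b) * cz a * (inverse (cz d) * cz c)"
    by (rule frac_mult) (simp_all add: cz_nz x y cz_comm)
  finally show ?thesis by (simp only: x(1) y(1) cF_Fract[OF x(2)] cF_Fract[OF y(2)])
qed

lemma cF_inj: "inj cF"
proof (rule injI)
  fix x y assume eq: "cF x = cF y"
  obtain a b where x: "x = Fract a b" "b \<noteq> 0" by (cases x)
  obtain c d where y: "y = Fract c d" "d \<noteq> 0" by (cases y)
  have "cz a * cz d = cz c * cz b" using eq x y frac_eq_iff[of "cz b" "cz d" "cz a" "cz c"]
    by (simp add: cF_Fract cz_nz cz_comm)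
  then have "a * d = c * b" by (simp add: cz_mult[symmetric] cz_inj)
  then show "x = y" using x y by (simp add: eq_fract)
qed

lemma cF_inverse: "cF (inverse x) = inverse (cF x)"
proof -
  obtain a b where x: "x = Fract a b" "b \<noteq> 0" by (cases x)
  show ?thesis
  proof (cases "a = 0")
    case True
    have "x = 0" using x True eq_fract(3)[of b 1] by (simp add: Zero_fract_def)
    then show ?thesis by (simp add: cF_0)
  next
    case False
    then show ?thesis using x by (simp add: cF_Fract cz_nz nonzero_inverse_mult_distrib)
  qed
qed

lemma cF_\<Phi>: "cF x * \<Phi> = \<Phi> * cF x"
proof -
  obtain a b where x: "x = Fract a b" "b \<noteq> 0" by (cases x)
  have 1: "inverse (cz b) * \<Phi> = \<Phi> * inverse (cz b)"
    using inv_comm[of "cz b" \<Phi>] cz_\<Phi>[of b] by simp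
  show ?thesis using x
    by (simp add: cF_Fract mult.assoc cz_\<Phi>[symmetric]) (simp add: mult.assoc[symmetric] 1)
qed

end


context carl begin

lemma Q_ge2: "Q \<ge> 2" using card_ge2 by (simp add: Qdef)

lemma froots: "x ^ Q = x \<Longrightarrow> \<exists>c. x = \<iota> [:c:]"
proof -
  assume x: "x ^ Q = x"
  define pp :: "'k poly" where "pp = monom 1 Q - [:0, 1:]"
  have ev: "poly pp y = y ^ Q - y" for y by (simp add: pp_def poly_monom)
  obtain n where Qn: "Q = Suc (Suc n)" using Q_ge2 by (metis add_2_eq_Suc le_Suc_ex)
  have cQ: "coeff pp Q = 1" by (simp add: pp_def Qn)
  then have pp0: "pp \<noteq> 0" by auto
  have dpp: "degree pp \<le> Q"
    unfolding pp_def using Q_ge2 by (intro degree_diff_le) (simp_all add: degree_monom_le)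
  let ?R = "{y. poly pp y = 0}"
  let ?I = "range (\<lambda>c. \<iota> [:c:])"
  have fin: "finite ?R" by (rule poly_roots_finite[OF pp0])
  have cR: "card ?R \<le> Q" using card_poly_roots_bound[OF pp0] dpp by linarith
  have sub: "?I \<subseteq> ?R" by (auto simp: ev iconst_frob)
  have inj: "inj (\<lambda>c. \<iota> [:c:])" by (rule injI) (rule iconst_inj)
  have cI: "card ?I = Q" using card_image[OF inj] by (simp add: Qdef)
  have "card ?I = card ?R" using cR cI card_mono[OF fin sub] by linarith
  then have "?I = ?R" using card_subset_eq[OF fin sub] by simp
  moreover have "x \<in> ?R" using x by (simp add: ev)
  ultimately show ?thesis by auto
qed

lemma frob_iter: "c ^ Q = c \<Longrightarrow> c ^ (Q ^ n) = (c::'k)"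
proof (induction n)
  case 0 then show ?case by simp
next
  case (Suc n)
  have "c ^ (Q ^ Suc n) = (c ^ (Q ^ n)) ^ Q" by (simp add: power_mult[symmetric] mult.commute)
  then show ?case using Suc by simp
qed

lemma hom_div:
  assumes g: "g \<in> P" "g \<noteq> 0" and h: "h \<in> P" and gh: "g * \<Phi> = h * g"
  shows "y \<in> P \<Longrightarrow> y * \<Phi> = h * y \<Longrightarrow> \<exists>a r. r \<in> P \<and> y = g * cz a + r \<and> r * \<Phi> = h * r \<and> (r = 0 \<or> dg r < dg g)"
proof (induction "dg y" arbitrary: y rule: less_induct)
  case less
  have h0: "h \<noteq> 0" using gh g(2) \<Phi>_nz by auto
  have dh: "dg h = 1"
  proof -
    have "dg (g * \<Phi>) = dg g + 1" using dg_mult[OF g(1) \<Phi>_P g(2) \<Phi>_nz] by (simp add: dg_\<Phi>)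
    moreover have "dg (h * g) = dg h + dg g" using dg_mult[OF h g(1) h0 g(2)] by simp
    ultimately show ?thesis using gh by simp
  qed
  have lrel: "ld w = ld h * ld w ^ Q" if w: "w \<in> P" "w \<noteq> 0" "w * \<Phi> = h * w" for w
  proof -
    have "ld (w * \<Phi>) = ld w" using dg_mult[OF w(1) \<Phi>_P w(2) \<Phi>_nz] by (simp add: ld_\<Phi>)
    moreover have "ld (h * w) = ld h * ld w ^ Q" using dg_mult[OF h w(1) h0 w(2)] by (simp add: dh)
    ultimately show ?thesis using w(3) by simp
  qed
  show ?case
  proof (cases "y = 0 \<or> dg y < dg g")
    case True
    then show ?thesis using less.prems by (intro exI[of _ 0] exI[of _ y]) auto
  next
    case False
    then have y0: "y \<noteq> 0" and gy: "dg g \<le> dg y" by auto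
    define k where "k = dg y - dg g"
    define c where "c = ld y / ld g"
    have lg: "ld g \<noteq> 0" using ld_nz g by simp
    have ly: "ld y \<noteq> 0" using ld_nz less.prems y0 by simp
    have lh: "ld h \<noteq> 0" using ld_nz h h0 by simp
    have ry: "ld y = ld h * ld y ^ Q" by (rule lrel[OF less.prems(1) y0 less.prems(2)])
    have rg: "ld g = ld h * ld g ^ Q" by (rule lrel[OF g gh])
    have c0: "c \<noteq> 0" using lg ly by (simp add: c_def)
    have cQ: "c ^ Q = c"
    proof -
      have "ld y ^ Q = ld y / ld h" using ry lh by (simp add: field_simps)
      moreover have "ld g ^ Q = ld g / ld h" using rg lh by (simp add: field_simps)
      ultimately show ?thesis using lh lg by (simp add: c_def power_divide)
    qed
    obtain s where s: "c = \<iota> [:s:]" using froots[OF cQ] by blast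
    have s0: "s \<noteq> 0" using s c0 by auto
    let ?C = "cz (monom s k)"
    have mk: "monom s k \<noteq> 0" using s0 by simp
    have C: "?C \<in> P" "?C \<noteq> 0" "dg ?C = k" "ld ?C = c"
      using cz_deg[of "monom s k"] cz_nz[OF mk] s s0 by (auto simp: degree_monom_eq)
    have gC: "dg (g * ?C) = dg y" "ld (g * ?C) = ld y"
      using dg_mult[OF g(1) C(1) g(2) C(2)] C gy frob_iter[OF cQ] lg by (auto simp: k_def c_def)
    have gCP: "g * ?C \<in> P" by (rule P_mult[OF g(1) C(1)])
    have y'P: "y - g * ?C \<in> P" by (rule P_diff[OF less.prems(1) gCP])
    have y'h: "(y - g * ?C) * \<Phi> = h * (y - g * ?C)"
    proof -
      have "g * ?C * \<Phi> = h * (g * ?C)" by (simp add: mult.assoc cz_\<Phi>[symmetric]) (simp add: mult.assoc[symmetric] gh)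
      then show ?thesis using less.prems(2) by (simp add: left_diff_distrib right_diff_distrib)
    qed
    show ?thesis
    proof (cases "y = g * ?C")
      case True
      then show ?thesis by (intro exI[of _ "monom s k"] exI[of _ 0]) simp
    next
      case False
      have "dg (y - g * ?C) < dg y" using dg_diff_less[OF less.prems(1) gCP] gC False by simp
      then obtain a r where ar: "r \<in> P" "y - g * ?C = g * cz a + r" "r * \<Phi> = h * r" "r = 0 \<or> dg r < dg g"
        using less.hyps[OF _ y'P y'h] by blast
      have "y = g * cz (monom s k + a) + r" using ar(2) by (simp add: cz_add distrib_left algebra_simps)
      then show ?thesis using ar by blast
    qed
  qed
qed

lemma twisted_sub_P: "twisted_polys e t \<subseteq> P"
proof
  fix x assume "x \<in> twisted_polys e t"
  then obtain c n where x: "x = (\<Sum>i<n. e (c i) * t ^ i)" unfolding twisted_polys_def by blast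
  have "x = twp (\<Sum>i<n. monom (c i) i)" by (simp add: x twp_sumset twp_monom)
  then show "x \<in> P" by simp
qed

lemma cF_range_add: "u \<in> range cF \<Longrightarrow> v \<in> range cF \<Longrightarrow> u + v \<in> range cF"
proof -
  assume "u \<in> range cF" "v \<in> range cF"
  then obtain x y where "u = cF x" "v = cF y" by blast
  then have "u + v = cF (x + y)" by (simp add: cF_add)
  then show ?thesis by simp
qed

lemma cent_aux:
  "\<forall>z b. z * \<Phi> = \<Phi> * z \<longrightarrow> b \<in> P \<longrightarrow> b \<noteq> 0 \<longrightarrow> dg b \<le> m \<longrightarrow> b * z \<in> P \<longrightarrow> z \<in> range cF"
proof (induction m rule: less_induct)
  case (less m)
  show ?case
  proof (intro allI impI)
    fix z b assume zc: "z * \<Phi> = \<Phi> * z" and bP: "b \<in> P" and b0: "b \<noteq> 0" and bm: "dg b \<le> m" and bz: "b * z \<in> P"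
    show "z \<in> range cF"
    proof (cases "z = 0")
      case True then show ?thesis using cF_0 by (metis rangeI)
    next
      case False
      let ?S = "\<lambda>b. b \<in> P \<and> b \<noteq> 0 \<and> b * z \<in> P"
      obtain g where gS: "?S g" and gmin: "\<And>b'. ?S b' \<Longrightarrow> dg g \<le> dg b'"
        using ex_has_least_nat[of ?S b dg] bP b0 bz by blast
      have g: "g \<in> P" "g \<noteq> 0" "g * z \<in> P" using gS by auto
      have gb: "dg g \<le> m" using gmin[of b] bP b0 bz bm by simp
      obtain H r where Hr: "H \<in> P" "r \<in> P" "g * \<Phi> = H * g + r" "r = 0 \<or> dg r < dg g"
        using rdiv[OF g(1,2), of "g * \<Phi>"] P_mult[OF g(1) \<Phi>_P] by blast
      have r0: "r = 0"
      proof (rule ccontr)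
        assume rn: "r \<noteq> 0"
        have "r * z = g * \<Phi> * z - H * (g * z)" using Hr(3) by (simp add: algebra_simps)
        also have "\<dots> = g * z * \<Phi> - H * (g * z)" by (simp add: mult.assoc zc)
        finally have "r * z \<in> P" using P_diff P_mult g(3) \<Phi>_P Hr(1) by metis
        then have "dg g \<le> dg r" using gmin[of r] Hr(2) rn by simp
        then show False using Hr(4) rn by simp
      qed
      have gH: "g * \<Phi> = H * g" using Hr(3) r0 by simp
      have yH: "g * z * \<Phi> = H * (g * z)"
        by (simp add: mult.assoc zc) (simp add: mult.assoc[symmetric] gH)
      obtain a r where ar: "r \<in> P" "g * z = g * cz a + r" "r * \<Phi> = H * r" "r = 0 \<or> dg r < dg g"
        using hom_div[OF g(1,2) Hr(1) gH g(3) yH] by blast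
      show ?thesis
      proof (cases "r = 0")
        case True
        then have "g * z = g * cz a" using ar by simp
        then have "z = cz a" using g(2) by simp
        then show ?thesis using cF_cz by (metis rangeI)
      next
        case False
        define z' where "z' = z - cz a"
        have gz': "g * z' = r" using ar(2) by (simp add: z'_def right_diff_distrib)
        have z'0: "z' \<noteq> 0" using gz' False by auto
        have z'c: "z' * \<Phi> = \<Phi> * z'" using zc cz_\<Phi>[of a] by (simp add: z'_def left_diff_distrib right_diff_distrib)
        define w where "w = inverse z'"
        have wc: "w * \<Phi> = \<Phi> * w" unfolding w_def by (rule inv_comm[OF z'c])
        have rw: "r * w = g" using z'0 by (simp add: w_def gz'[symmetric] mult.assoc)
        have "dg r < m" using ar(4) False gb by simp
        then have "w \<in> range cF" using less.IH[of "dg r"] wc ar(1) False rw g(1) by auto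
        then obtain u where u: "w = cF u" by blast
        have "z' = inverse w" by (simp add: w_def)
        then have "z' = cF (inverse u)" using u by (simp add: cF_inverse)
        then have "z = cz a + cF (inverse u)" unfolding z'_def by (simp add: algebra_simps)
        then have "z = cF (Fract a 1) + cF (inverse u)" by (simp add: cF_cz)
        then show ?thesis using cF_range_add by (metis rangeI)
      qed
    qed
  qed
qed

lemma centralizer: "z * \<Phi> = \<Phi> * z \<longleftrightarrow> z \<in> range cF"
proof
  assume zc: "z * \<Phi> = \<Phi> * z"
  obtain a b where ab: "a \<in> twisted_polys e t" "b \<in> twisted_polys e t" "b \<noteq> 0" "z = inverse b * a"
    using frac by blast
  have "b * z = a" using ab by (simp add: mult.assoc[symmetric])
  moreover have "b \<in> P" "a \<in> P" using ab twisted_sub_P by auto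
  ultimately show "z \<in> range cF" using cent_aux[of "dg b"] zc ab(3) by blast
next
  assume "z \<in> range cF"
  then show "z * \<Phi> = \<Phi> * z" using cF_\<Phi> by auto
qed

end

theorem mainTheorem13:
  fixes p n :: nat
    and \<iota> :: "'q::{finite,field} poly \<Rightarrow> 'k::field"
    and e :: "'k \<Rightarrow> 'd::division_ring"
    and t :: 'd
  assumes "prime p" and "CHAR('k) = p"
    and "n > 0" and "card (UNIV :: 'q set) = p ^ n"
    and "\<iota> 1 = 1" and "\<forall>a b. \<iota> (a + b) = \<iota> a + \<iota> b" and "\<forall>a b. \<iota> (a * b) = \<iota> a * \<iota> b"
    and "is_left_twisted_fraction_ring (card (UNIV :: 'q set)) e t"
  shows "dioph_map consts_F 3 (consts_D \<iota> e t) 4 (carlitz_F \<iota> e t)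
       \<and> effective_dioph_map consts_F 3 (consts_D \<iota> e t) 4 (carlitz_F \<iota> e t)"
proof -
  interpret carl \<iota> e t "card (UNIV :: 'q set)"
    by unfold_locales (use assms in auto)
  have cen: "\<And>z. z * (consts_D \<iota> e t 2 + consts_D \<iota> e t 3) = (consts_D \<iota> e t 2 + consts_D \<iota> e t 3) * z
      \<longleftrightarrow> z \<in> range (carlitz_F \<iota> e t)"
    using centralizer by (simp add: consts_D_def \<Phi>_def)
  have cst: "carlitz_F \<iota> e t (consts_F j) = eval_tm (consts_D \<iota> e t) [] (trt (Cst j))" if j: "j < 3" for j
  proof -
    have "j = 0 \<or> j = 1 \<or> j = 2" using j by auto
    then show ?thesis
      by (auto simp: consts_F_def consts_D_def cF_0 cF_1 cF_cz cz_X phiT_def \<Phi>_def)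
  qed
  show ?thesis by (rule main_logic[OF cF_add cF_mult cst cF_inj cen])
qed

end
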